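(* Let $\lambda>0$ and $\mu\ge0$ be reals and let $(G_n)_{n\ge1}$ be elements of $\mathcal H$ such that the infinite product $\prod_n G_n$ is of type $(\lambda,\mu)$. Then $\prod_{n\ge1}G_n$ converges in $\mathcal H$ to an element $G$ of order at most $\mu$.
   Context: Let $p$ be an odd prime. $\mathcal H$ is the ring of power series in $\mathbb Q_p[[x]]$ converging on the open unit disc of $\mathbb C_p$, with its Fréchet topology given by the norms $\|f\|_\rho=\sup_{|z|_p\le\rho}|f(z)|_p$, $0<\rho<1$; put $\|f\|_1=\sup_{\rho<1}\|f\|_\rho\in[0,\infty]$. Let $\rho_0=p^{-1/(p-1)}$ and, for $0<\rho<1$, let $n_0(\rho)$ be the smallest integer $\ge0$ with $\rho^{p^{n_0(\rho)}}\le\rho_0$. A product $\prod_nG_n$ is of type $(\lambda,\mu)$ if (1) $\|G_n\|_1\le p^{\mu}$ for all $n$, and (2) there is a constant $\nu$ such that for every real $0<\rho<1$ and every $n\ge n_0(\rho)$, $\|G_n-1\|_\rho\le p^{\nu}p^{-\lambda(n-n_0(\rho))}$. The order of $G\in\mathcal H$ is the infimum of the reals $h$ such that $\sup_{m\ge0}p^{-mh}\|G\|_{\rho^{1/p^m}}<\infty$ for some $\rho\in(0,1)$. *)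

theory Defs
  imports Complex_Main "HOL-Library.Extended_Real" "HOL-Computational_Algebra.Primes"
begin

definition padic_val_rat :: "nat \<Rightarrow> rat \<Rightarrow> int" where
  "padic_val_rat p r = (let (a, b) = quotient_of r in
      int (multiplicity (int p) a) - int (multiplicity (int p) b))"

definition qabs :: "nat \<Rightarrow> rat \<Rightarrow> real" where
  "qabs p r = (if r = 0 then 0 else real p powr (- real_of_int (padic_val_rat p r)))"

section \<open>Q_p as the completion of Q: classes of p-adic Cauchy sequences\<close>

definition qp_cauchy :: "nat \<Rightarrow> (nat \<Rightarrow> rat) \<Rightarrow> bool" where
  "qp_cauchy p X \<longleftrightarrow> (\<forall>e>0. \<exists>N. \<forall>m\<ge>N. \<forall>n\<ge>N. qabs p (X m - X n) < e)"

definition qp_equiv :: "nat \<Rightarrow> (nat \<Rightarrow> rat) \<Rightarrow> (nat \<Rightarrow> rat) \<Rightarrow> bool" where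
  "qp_equiv p X Y \<longleftrightarrow> qp_cauchy p X \<and> qp_cauchy p Y \<and> (\<lambda>n. qabs p (X n - Y n)) \<longlonglongrightarrow> 0"

type_synonym qp = "(nat \<Rightarrow> rat) set"

definition qp_of :: "nat \<Rightarrow> (nat \<Rightarrow> rat) \<Rightarrow> qp" where
  "qp_of p X = {Y. qp_equiv p X Y}"

definition Qp :: "nat \<Rightarrow> qp set" where
  "Qp p = {qp_of p X | X. qp_cauchy p X}"

definition qp_rep :: "qp \<Rightarrow> nat \<Rightarrow> rat" where
  "qp_rep a = (SOME X. X \<in> a)"

definition qp_add :: "nat \<Rightarrow> qp \<Rightarrow> qp \<Rightarrow> qp" where
  "qp_add p a b = qp_of p (\<lambda>n. qp_rep a n + qp_rep b n)"

definition qp_mult :: "nat \<Rightarrow> qp \<Rightarrow> qp \<Rightarrow> qp" where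
  "qp_mult p a b = qp_of p (\<lambda>n. qp_rep a n * qp_rep b n)"

definition qp_neg :: "nat \<Rightarrow> qp \<Rightarrow> qp" where
  "qp_neg p a = qp_of p (\<lambda>n. - qp_rep a n)"

definition qp_zero :: "nat \<Rightarrow> qp" where
  "qp_zero p = qp_of p (\<lambda>_. 0)"

definition qp_one :: "nat \<Rightarrow> qp" where
  "qp_one p = qp_of p (\<lambda>_. 1)"

definition qp_abs :: "nat \<Rightarrow> qp \<Rightarrow> real" where
  "qp_abs p a = lim (\<lambda>n. qabs p (qp_rep a n))"

type_synonym pser = "nat \<Rightarrow> qp"

definition ps_one :: "nat \<Rightarrow> pser" where
  "ps_one p = (\<lambda>k. if k = 0 then qp_one p else qp_zero p)"

definition ps_sub :: "nat \<Rightarrow> pser \<Rightarrow> pser \<Rightarrow> pser" where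
  "ps_sub p f g = (\<lambda>k. qp_add p (f k) (qp_neg p (g k)))"

definition ps_mult :: "nat \<Rightarrow> pser \<Rightarrow> pser \<Rightarrow> pser" where
  "ps_mult p f g = (\<lambda>k. foldr (qp_add p)
      (map (\<lambda>i. qp_mult p (f i) (g (k - i))) [0..<Suc k]) (qp_zero p))"

text \<open>Membership in H: coefficients in Q_p and the series converges on the open unit
  disc of C_p, i.e. |a_k|_p r^k tends to 0 for every 0 < r < 1.\<close>
definition inH :: "nat \<Rightarrow> pser \<Rightarrow> bool" where
  "inH p f \<longleftrightarrow> (\<forall>k. f k \<in> Qp p) \<and>
     (\<forall>r. 0 < r \<and> r < 1 \<longrightarrow> (\<lambda>k. qp_abs p (f k) * r ^ k) \<longlonglongrightarrow> 0)"

definition gnorm :: "nat \<Rightarrow> real \<Rightarrow> pser \<Rightarrow> real" where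
  "gnorm p r f = (SUP k. qp_abs p (f k) * r ^ k)"

definition rho0 :: "nat \<Rightarrow> real" where
  "rho0 p = real p powr (- 1 / (real p - 1))"

definition n0 :: "nat \<Rightarrow> real \<Rightarrow> nat" where
  "n0 p r = (LEAST n. r ^ (p ^ n) \<le> rho0 p)"

definition pprod :: "nat \<Rightarrow> (nat \<Rightarrow> pser) \<Rightarrow> nat \<Rightarrow> pser" where
  "pprod p G N = foldr (\<lambda>n acc. ps_mult p (G n) acc) [1..<Suc N] (ps_one p)"

text \<open>The product of (G_n)_{n>=1} is of type (lambda, mu). The condition
  ||G_n||_1 \<le> p^mu is written as ||G_n||_r \<le> p^mu for all 0<r<1.\<close>
definition prod_type :: "nat \<Rightarrow> (nat \<Rightarrow> pser) \<Rightarrow> real \<Rightarrow> real \<Rightarrow> bool" where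
  "prod_type p G lam mu \<longleftrightarrow>
     (\<forall>n\<ge>1. \<forall>r. 0 < r \<and> r < 1 \<longrightarrow> gnorm p r (G n) \<le> real p powr mu) \<and>
     (\<exists>nu::real. \<forall>r. 0 < r \<and> r < 1 \<longrightarrow> (\<forall>n\<ge>1. n \<ge> n0 p r \<longrightarrow>
        gnorm p r (ps_sub p (G n) (ps_one p))
          \<le> real p powr nu * real p powr (- lam * (real n - real (n0 p r)))))"

definition conv_H :: "nat \<Rightarrow> (nat \<Rightarrow> pser) \<Rightarrow> pser \<Rightarrow> bool" where
  "conv_H p F g \<longleftrightarrow> (\<forall>r. 0 < r \<and> r < 1 \<longrightarrow> (\<lambda>N. gnorm p r (ps_sub p (F N) g)) \<longlonglongrightarrow> 0)"

definition order_H :: "nat \<Rightarrow> pser \<Rightarrow> ereal" where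
  "order_H p g = Inf {ereal h | h. \<exists>r. 0 < r \<and> r < 1 \<and>
      bdd_above (range (\<lambda>m::nat. real p powr (- real m * h) * gnorm p (r powr (1 / real p ^ m)) g))}"

end

theory Submission
  imports Defs "HOL-Analysis.Elementary_Normed_Spaces"
begin


lemma mult_add_ge:
  fixes p u w :: int
  assumes "prime p" "u + w \<noteq> 0"
  shows "min (multiplicity p u) (multiplicity p w) \<le> multiplicity p (u + w)"
proof -
  let ?m = "min (multiplicity p u) (multiplicity p w)"
  have "p ^ ?m dvd u" by (meson min.cobounded1 multiplicity_dvd power_le_dvd)
  moreover have "p ^ ?m dvd w" by (meson min.cobounded2 multiplicity_dvd power_le_dvd)
  ultimately have "p ^ ?m dvd u + w" by simp
  then show ?thesis using assms
    by (intro multiplicity_geI) (auto simp: prime_elem_not_unit)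
qed

lemma pval_frac:
  fixes p :: nat and a b :: int
  assumes "prime p" "a \<noteq> 0" "b \<noteq> 0"
  shows "padic_val_rat p (of_int a / of_int b) =
           int (multiplicity (int p) a) - int (multiplicity (int p) b)"
proof -
  obtain a' b' where q: "quotient_of (of_int a / of_int b) = (a', b')" by fastforce
  have b'0: "b' > 0" using quotient_of_denom_pos[OF q] .
  have eq: "(of_int a / of_int b :: rat) = of_int a' / of_int b'" using quotient_of_div[OF q] .
  have "a' \<noteq> 0" using eq assms b'0 by auto
  have "(of_int (a * b') :: rat) = of_int (a' * b)" using eq assms b'0
    by (simp add: field_simps)
  hence e: "a * b' = a' * b" by (simp only: of_int_eq_iff)
  have pp: "prime (int p)" using assms(1) by simp
  have "multiplicity (int p) (a * b') = multiplicity (int p) (a' * b)" using e by simp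
  hence "multiplicity (int p) a + multiplicity (int p) b' = multiplicity (int p) a' + multiplicity (int p) b"
    using pp assms \<open>a' \<noteq> 0\<close> b'0
    by (simp add: prime_elem_multiplicity_mult_distrib)
  thus ?thesis by (simp add: padic_val_rat_def q)
qed

lemma rat_frac_ex: "\<exists>a b. b > 0 \<and> (x::rat) = of_int a / of_int b"
  by (metis prod.collapse quotient_of_denom_pos' quotient_of_div)

lemma pval_mult:
  assumes "prime p" "x \<noteq> 0" "y \<noteq> 0"
  shows "padic_val_rat p (x * y) = padic_val_rat p x + padic_val_rat p y"
proof -
  obtain a b where ab: "b > 0" "x = of_int a / of_int b" using rat_frac_ex by blast
  obtain c d where cd: "d > 0" "y = of_int c / of_int d" using rat_frac_ex by blast
  have a0: "a \<noteq> 0" "c \<noteq> 0" using ab cd assms by auto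
  have xy: "x * y = of_int (a*c) / of_int (b*d)" using ab cd by simp
  have pp: "prime (int p)" using assms(1) by simp
  have "padic_val_rat p (x*y) = int (multiplicity (int p) (a*c)) - int (multiplicity (int p) (b*d))"
    unfolding xy using pval_frac[OF assms(1), of "a*c" "b*d"] ab cd a0 by simp
  thus ?thesis using pval_frac[OF assms(1)] ab cd a0 pp
    by (simp add: prime_elem_multiplicity_mult_distrib)
qed

lemma pval_add:
  assumes "prime p" "x \<noteq> 0" "y \<noteq> 0" "x + y \<noteq> 0"
  shows "padic_val_rat p (x + y) \<ge> min (padic_val_rat p x) (padic_val_rat p y)"
proof -
  obtain a b where ab: "b > 0" "x = of_int a / of_int b" using rat_frac_ex by blast
  obtain c d where cd: "d > 0" "y = of_int c / of_int d" using rat_frac_ex by blast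
  have a0: "a \<noteq> 0" "c \<noteq> 0" using ab cd assms by auto
  have xy: "x + y = of_int (a*d + c*b) / of_int (b*d)" using ab cd by (simp add: field_simps)
  have n0: "a*d + c*b \<noteq> 0" using xy assms by (metis div_0 of_int_0)
  have pp: "prime (int p)" using assms(1) by simp
  let ?m = "multiplicity (int p)"
  have "min (?m (a*d)) (?m (c*b)) \<le> ?m (a*d + c*b)" using mult_add_ge[OF pp n0] .
  hence "min (?m a + ?m d) (?m c + ?m b) \<le> ?m (a*d + c*b)" using pp a0 ab cd
    by (simp add: prime_elem_multiplicity_mult_distrib)
  moreover have "padic_val_rat p (x+y) = int (?m (a*d + c*b)) - int (?m (b*d))"
    unfolding xy using pval_frac[OF assms(1) n0, of "b*d"] ab cd by simp
  moreover have "?m (b*d) = ?m b + ?m d" using pp ab cd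
    by (simp add: prime_elem_multiplicity_mult_distrib)
  moreover have "padic_val_rat p x = int (?m a) - int (?m b)" using pval_frac[OF assms(1)] ab a0 by simp
  moreover have "padic_val_rat p y = int (?m c) - int (?m d)" using pval_frac[OF assms(1)] cd a0 by simp
  ultimately show ?thesis by linarith
qed


lemma qabs_nonneg: "qabs p x \<ge> 0" by (simp add: qabs_def)
lemma qabs_zero[simp]: "qabs p 0 = 0" by (simp add: qabs_def)
lemma qabs_pos: "prime p \<Longrightarrow> x \<noteq> 0 \<Longrightarrow> qabs p x > 0"
  using prime_gt_0_nat by (simp add: qabs_def)

lemma qabs_mult: assumes "prime p" shows "qabs p (x*y) = qabs p x * qabs p y"
proof (cases "x = 0 \<or> y = 0")
  case True thus ?thesis by (auto simp: qabs_def)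
next
  case False
  thus ?thesis using pval_mult[OF assms, of x y]
    by (simp add: qabs_def powr_add[symmetric])
qed

lemma qabs_one: assumes "prime p" shows "qabs p 1 = 1"
proof -
  have "padic_val_rat p 1 = 0"
    using pval_frac[OF assms, of 1 1] by simp
  thus ?thesis using prime_gt_0_nat[OF assms] by (simp add: qabs_def)
qed

lemma qabs_minus: assumes "prime p" shows "qabs p (- x) = qabs p x"
proof -
  have "qabs p (-1) * qabs p (-1) = 1" using qabs_mult[OF assms, of "-1" "-1"] qabs_one[OF assms] by simp
  moreover have "qabs p (-1) \<ge> 0" by (rule qabs_nonneg)
  ultimately have "qabs p (-1) = 1"
    by (metis power2_eq_square power2_eq_1_iff neg_0_le_iff_le zero_le_one not_one_le_zero order_antisym_conv)
  thus ?thesis using qabs_mult[OF assms, of "-1" x] by simp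
qed

lemma qabs_add: assumes "prime p" shows "qabs p (x + y) \<le> max (qabs p x) (qabs p y)"
proof (cases "x = 0 \<or> y = 0 \<or> x + y = 0")
  case True
  have "qabs p x \<ge> 0" "qabs p y \<ge> 0" by (rule qabs_nonneg)+
  with True show ?thesis by (elim disjE) (simp_all add: le_max_iff_disj)
next
  case False
  hence h: "min (padic_val_rat p x) (padic_val_rat p y) \<le> padic_val_rat p (x+y)"
    using pval_add[OF assms] by auto
  have p1: "real p > 1" using assms prime_gt_1_nat by auto
  have "real p powr (- real_of_int (padic_val_rat p (x+y))) \<le>
        max (real p powr (- real_of_int (padic_val_rat p x))) (real p powr (- real_of_int (padic_val_rat p y)))"
  proof (cases "padic_val_rat p x \<le> padic_val_rat p y")
    case True
    hence "padic_val_rat p x \<le> padic_val_rat p (x+y)" using h by linarith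
    hence "real p powr (- real_of_int (padic_val_rat p (x+y))) \<le> real p powr (- real_of_int (padic_val_rat p x))"
      using p1 by (intro powr_mono) auto
    thus ?thesis by linarith
  next
    case False
    hence "padic_val_rat p y \<le> padic_val_rat p (x+y)" using h by linarith
    hence "real p powr (- real_of_int (padic_val_rat p (x+y))) \<le> real p powr (- real_of_int (padic_val_rat p y))"
      using p1 by (intro powr_mono) auto
    thus ?thesis by linarith
  qed
  thus ?thesis using False by (simp add: qabs_def)
qed

lemma qabs_diff_sym: assumes "prime p" shows "qabs p (x - y) = qabs p (y - x)"
  using qabs_minus[OF assms, of "x - y"] by simp

lemma qabs_tri: assumes "prime p" shows "qabs p (x - z) \<le> max (qabs p (x - y)) (qabs p (y - z))"
  using qabs_add[OF assms, of "x - y" "y - z"] by simp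

lemma qabs_rev: assumes "prime p" shows "\<bar>qabs p x - qabs p y\<bar> \<le> qabs p (x - y)"
proof -
  have "qabs p x \<le> max (qabs p (x - y)) (qabs p y)" using qabs_add[OF assms, of "x-y" y] by simp
  moreover have "qabs p y \<le> max (qabs p (x - y)) (qabs p x)" using qabs_add[OF assms, of "x-y" "-x"]
    qabs_add[OF assms, of "y - x" x] qabs_diff_sym[OF assms, of x y] by simp
  moreover have "\<And>a b::real. a \<ge> 0 \<Longrightarrow> b \<ge> 0 \<Longrightarrow> max a b \<le> a + b" by (simp add: max_def)
  ultimately have "qabs p x \<le> qabs p (x - y) + qabs p y" "qabs p y \<le> qabs p (x - y) + qabs p x"
    using qabs_nonneg[of p] by (meson order.trans)+
  thus ?thesis by (simp add: abs_le_iff)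
qed


context fixes p :: nat assumes pr: "prime p" begin

lemma qabs_add_le: "qabs p (x + y) \<le> qabs p x + qabs p y"
  using qabs_add[OF pr, of x y] qabs_nonneg[of p x] qabs_nonneg[of p y] unfolding max_def
  by (simp split: if_splits)

lemma cauchy_bounded:
  assumes "qp_cauchy p X" shows "\<exists>B>0. \<forall>n. qabs p (X n) \<le> B"
proof -
  obtain N where N: "\<forall>m\<ge>N. \<forall>n\<ge>N. qabs p (X m - X n) < 1"
    using assms unfolding qp_cauchy_def by (meson zero_less_one)
  define B where "B = 1 + qabs p (X N) + (\<Sum>i<N. qabs p (X i))"
  have "qabs p (X n) \<le> B" for n
  proof (cases "n < N")
    case True
    have "qabs p (X n) \<le> (\<Sum>i<N. qabs p (X i))"
      using True by (intro member_le_sum) (auto simp: qabs_nonneg)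
    thus ?thesis unfolding B_def using qabs_nonneg[of p "X N"] by linarith
  next
    case False
    have "qabs p (X n) \<le> qabs p (X n - X N) + qabs p (X N)" using qabs_add_le[of "X n - X N" "X N"] by simp
    moreover have "qabs p (X n - X N) < 1" using N False by auto
    moreover have "(\<Sum>i<N. qabs p (X i)) \<ge> 0" by (intro sum_nonneg) (auto simp: qabs_nonneg)
    ultimately show ?thesis unfolding B_def by linarith
  qed
  moreover have "B > 0"
  proof -
    have "(\<Sum>i<N. qabs p (X i)) \<ge> 0" by (intro sum_nonneg) (auto simp: qabs_nonneg)
    thus ?thesis unfolding B_def using qabs_nonneg[of p "X N"] by linarith
  qed
  ultimately show ?thesis by blast
qed

lemma cauchy_const: "qp_cauchy p (\<lambda>_. c)" unfolding qp_cauchy_def by simp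

lemma cauchy_add:
  assumes "qp_cauchy p X" "qp_cauchy p Y" shows "qp_cauchy p (\<lambda>n. X n + Y n)"
  unfolding qp_cauchy_def
proof (intro allI impI)
  fix e :: real assume "e > 0"
  obtain N1 where N1: "\<forall>m\<ge>N1. \<forall>n\<ge>N1. qabs p (X m - X n) < e" using assms(1) \<open>e>0\<close> unfolding qp_cauchy_def by blast
  obtain N2 where N2: "\<forall>m\<ge>N2. \<forall>n\<ge>N2. qabs p (Y m - Y n) < e" using assms(2) \<open>e>0\<close> unfolding qp_cauchy_def by blast
  show "\<exists>N. \<forall>m\<ge>N. \<forall>n\<ge>N. qabs p (X m + Y m - (X n + Y n)) < e"
  proof (intro exI allI impI)
    fix m n assume "max N1 N2 \<le> m" "max N1 N2 \<le> n"
    hence "qabs p (X m - X n) < e" "qabs p (Y m - Y n) < e" using N1 N2 by auto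
    moreover have "qabs p (X m + Y m - (X n + Y n)) \<le> max (qabs p (X m - X n)) (qabs p (Y m - Y n))"
      using qabs_add[OF pr, of "X m - X n" "Y m - Y n"] by (simp add: algebra_simps)
    ultimately show "qabs p (X m + Y m - (X n + Y n)) < e" by linarith
  qed
qed

lemma cauchy_neg:
  assumes "qp_cauchy p X" shows "qp_cauchy p (\<lambda>n. - X n)"
  unfolding qp_cauchy_def
proof (intro allI impI)
  fix e :: real assume "e > 0"
  then obtain N where N: "\<forall>m\<ge>N. \<forall>n\<ge>N. qabs p (X m - X n) < e" using assms unfolding qp_cauchy_def by blast
  show "\<exists>N. \<forall>m\<ge>N. \<forall>n\<ge>N. qabs p (- X m - - X n) < e"
  proof (intro exI allI impI)
    fix m n assume "N \<le> m" "N \<le> n"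
    hence "qabs p (X n - X m) < e" using N by blast
    moreover have "- X m - - X n = X n - X m" by simp
    ultimately show "qabs p (- X m - - X n) < e" by simp
  qed
qed

lemma cauchy_mult:
  assumes "qp_cauchy p X" "qp_cauchy p Y" shows "qp_cauchy p (\<lambda>n. X n * Y n)"
  unfolding qp_cauchy_def
proof (intro allI impI)
  fix e :: real assume "e > 0"
  obtain BX where BX: "BX > 0" "\<forall>n. qabs p (X n) \<le> BX" using cauchy_bounded[OF assms(1)] by blast
  obtain BY where BY: "BY > 0" "\<forall>n. qabs p (Y n) \<le> BY" using cauchy_bounded[OF assms(2)] by blast
  have e1: "e / BY > 0" "e / BX > 0" using \<open>e>0\<close> BX BY by auto
  obtain N1 where N1: "\<forall>m\<ge>N1. \<forall>n\<ge>N1. qabs p (X m - X n) < e / BY" using assms(1) e1 unfolding qp_cauchy_def by blast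
  obtain N2 where N2: "\<forall>m\<ge>N2. \<forall>n\<ge>N2. qabs p (Y m - Y n) < e / BX" using assms(2) e1 unfolding qp_cauchy_def by blast
  show "\<exists>N. \<forall>m\<ge>N. \<forall>n\<ge>N. qabs p (X m * Y m - X n * Y n) < e"
  proof (intro exI allI impI)
    fix m n assume "max N1 N2 \<le> m" "max N1 N2 \<le> n"
    hence h1: "qabs p (X m - X n) < e / BY" and h2: "qabs p (Y m - Y n) < e / BX" using N1 N2 by auto
    have eq: "X m * Y m - X n * Y n = X m * (Y m - Y n) + (X m - X n) * Y n" by (simp add: algebra_simps)
    have a: "qabs p (X m * (Y m - Y n)) < e"
    proof -
      have "qabs p (X m * (Y m - Y n)) = qabs p (X m) * qabs p (Y m - Y n)" by (simp add: qabs_mult[OF pr])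
      also have "\<dots> \<le> BX * qabs p (Y m - Y n)" using BX by (intro mult_right_mono) (auto simp: qabs_nonneg)
      also have "\<dots> < BX * (e / BX)" using h2 BX by (intro mult_strict_left_mono) auto
      finally show ?thesis using BX by simp
    qed
    have b: "qabs p ((X m - X n) * Y n) < e"
    proof -
      have "qabs p ((X m - X n) * Y n) = qabs p (X m - X n) * qabs p (Y n)" by (simp add: qabs_mult[OF pr])
      also have "\<dots> \<le> qabs p (X m - X n) * BY" using BY by (intro mult_left_mono) (auto simp: qabs_nonneg)
      also have "\<dots> < (e / BY) * BY" using h1 BY by (intro mult_strict_right_mono) auto
      finally show ?thesis using BY by simp
    qed
    show "qabs p (X m * Y m - X n * Y n) < e" unfolding eq
      using qabs_add[OF pr, of "X m * (Y m - Y n)" "(X m - X n) * Y n"] a b by linarith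
  qed
qed

lemma equiv_refl: "qp_cauchy p X \<Longrightarrow> qp_equiv p X X"
  unfolding qp_equiv_def by simp

lemma equiv_sym: "qp_equiv p X Y \<Longrightarrow> qp_equiv p Y X"
proof -
  have "(\<lambda>n. qabs p (Y n - X n)) = (\<lambda>n. qabs p (X n - Y n))"
    by (rule ext) (rule qabs_diff_sym[OF pr])
  thus "qp_equiv p X Y \<Longrightarrow> qp_equiv p Y X" unfolding qp_equiv_def by simp
qed

lemma null_add:
  assumes "(\<lambda>n. qabs p (U n)) \<longlonglongrightarrow> 0" "(\<lambda>n. qabs p (V n)) \<longlonglongrightarrow> 0"
  shows "(\<lambda>n. qabs p (U n + V n)) \<longlonglongrightarrow> 0"
proof (rule Lim_null_comparison[OF _ tendsto_add_zero[OF assms]])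
  show "\<forall>\<^sub>F n in sequentially. norm (qabs p (U n + V n)) \<le> qabs p (U n) + qabs p (V n)"
    using qabs_add_le qabs_nonneg by simp
qed

lemma null_cmult:
  assumes "(\<lambda>n. qabs p (U n)) \<longlonglongrightarrow> 0" "\<forall>n. qabs p (V n) \<le> B"
  shows "(\<lambda>n. qabs p (V n * U n)) \<longlonglongrightarrow> 0"
proof (rule Lim_null_comparison[OF _ tendsto_mult_right_zero[OF assms(1), of B]])
  show "\<forall>\<^sub>F n in sequentially. norm (qabs p (V n * U n)) \<le> B * qabs p (U n)"
    using assms(2) qabs_nonneg by (simp add: qabs_mult[OF pr] mult_right_mono)
qed

lemma equiv_trans: "qp_equiv p X Y \<Longrightarrow> qp_equiv p Y Z \<Longrightarrow> qp_equiv p X Z"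
  unfolding qp_equiv_def using null_add[of "\<lambda>n. X n - Y n" "\<lambda>n. Y n - Z n"] by simp

lemma equiv_add: "qp_equiv p X X' \<Longrightarrow> qp_equiv p Y Y' \<Longrightarrow>
   qp_equiv p (\<lambda>n. X n + Y n) (\<lambda>n. X' n + Y' n)"
  unfolding qp_equiv_def using null_add[of "\<lambda>n. X n - X' n" "\<lambda>n. Y n - Y' n"] cauchy_add
  by (simp add: algebra_simps)

lemma equiv_neg: "qp_equiv p X X' \<Longrightarrow> qp_equiv p (\<lambda>n. - X n) (\<lambda>n. - X' n)"
proof -
  have "(\<lambda>n. qabs p (- X n - - X' n)) = (\<lambda>n. qabs p (X' n - X n))" by simp
  also have "\<dots> = (\<lambda>n. qabs p (X n - X' n))"
    by (rule ext) (rule qabs_diff_sym[OF pr])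
  finally show "qp_equiv p X X' \<Longrightarrow> qp_equiv p (\<lambda>n. - X n) (\<lambda>n. - X' n)"
    unfolding qp_equiv_def using cauchy_neg by simp
qed

lemma equiv_mult: assumes "qp_equiv p X X'" "qp_equiv p Y Y'"
  shows "qp_equiv p (\<lambda>n. X n * Y n) (\<lambda>n. X' n * Y' n)"
proof -
  have c: "qp_cauchy p X" "qp_cauchy p X'" "qp_cauchy p Y" "qp_cauchy p Y'"
    using assms unfolding qp_equiv_def by auto
  obtain BX where BX: "\<forall>n. qabs p (X n) \<le> BX" using cauchy_bounded[OF c(1)] by blast
  obtain BY where BY: "\<forall>n. qabs p (Y' n) \<le> BY" using cauchy_bounded[OF c(4)] by blast
  have "(\<lambda>n. qabs p (X n * (Y n - Y' n) + Y' n * (X n - X' n))) \<longlonglongrightarrow> 0"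
  proof (rule null_add[of "\<lambda>n. X n * (Y n - Y' n)" "\<lambda>n. Y' n * (X n - X' n)"])
    show "(\<lambda>n. qabs p (X n * (Y n - Y' n))) \<longlonglongrightarrow> 0"
      using assms(2) BX unfolding qp_equiv_def by (intro null_cmult[of "\<lambda>n. Y n - Y' n" X]) auto
    show "(\<lambda>n. qabs p (Y' n * (X n - X' n))) \<longlonglongrightarrow> 0"
      using assms(1) BY unfolding qp_equiv_def by (intro null_cmult[of "\<lambda>n. X n - X' n" Y']) auto
  qed
  moreover have "\<And>n. X n * (Y n - Y' n) + Y' n * (X n - X' n) = X n * Y n - X' n * Y' n"
    by (simp add: algebra_simps)
  ultimately show ?thesis unfolding qp_equiv_def using c cauchy_mult by simp
qed

lemma qp_of_eq: assumes "qp_equiv p X Y" shows "qp_of p X = qp_of p Y"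
  unfolding qp_of_def using assms equiv_sym equiv_trans by blast

lemma rep_of: assumes "qp_cauchy p X" shows "qp_equiv p X (qp_rep (qp_of p X))"
proof -
  have "X \<in> qp_of p X" using equiv_refl[OF assms] by (simp add: qp_of_def)
  hence "qp_rep (qp_of p X) \<in> qp_of p X" unfolding qp_rep_def by (rule someI[of "\<lambda>Y. Y \<in> qp_of p X"])
  thus ?thesis by (simp add: qp_of_def)
qed

lemma of_in: "qp_cauchy p X \<Longrightarrow> qp_of p X \<in> Qp p"
  unfolding Qp_def by blast

lemma Qp_E: assumes "a \<in> Qp p" obtains X where "qp_cauchy p X" "a = qp_of p X"
  using assms unfolding Qp_def by blast

lemma add_of: "qp_cauchy p X \<Longrightarrow> qp_cauchy p Y \<Longrightarrow>
   qp_add p (qp_of p X) (qp_of p Y) = qp_of p (\<lambda>n. X n + Y n)"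
  unfolding qp_add_def by (rule qp_of_eq, rule equiv_sym, rule equiv_add; rule rep_of)

lemma mult_of: "qp_cauchy p X \<Longrightarrow> qp_cauchy p Y \<Longrightarrow>
   qp_mult p (qp_of p X) (qp_of p Y) = qp_of p (\<lambda>n. X n * Y n)"
  unfolding qp_mult_def by (rule qp_of_eq, rule equiv_sym, rule equiv_mult; rule rep_of)

lemma neg_of: "qp_cauchy p X \<Longrightarrow> qp_neg p (qp_of p X) = qp_of p (\<lambda>n. - X n)"
  unfolding qp_neg_def by (rule qp_of_eq, rule equiv_sym, rule equiv_neg, rule rep_of)

lemma qabs_conv: assumes "qp_cauchy p X" shows "convergent (\<lambda>n. qabs p (X n))"
proof -
  have "Cauchy (\<lambda>n. qabs p (X n))"
  proof (rule metric_CauchyI)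
    fix e :: real assume "e > 0"
    then obtain N where "\<forall>m\<ge>N. \<forall>n\<ge>N. qabs p (X m - X n) < e" using assms unfolding qp_cauchy_def by blast
    thus "\<exists>M. \<forall>m\<ge>M. \<forall>n\<ge>M. dist (qabs p (X m)) (qabs p (X n)) < e"
      using qabs_rev[OF pr] unfolding dist_real_def by (meson le_less_trans)
  qed
  thus ?thesis by (simp add: Cauchy_convergent_iff)
qed

lemma abs_of: assumes "qp_cauchy p X" shows "(\<lambda>n. qabs p (X n)) \<longlonglongrightarrow> qp_abs p (qp_of p X)"
proof -
  let ?R = "qp_rep (qp_of p X)"
  obtain L where L: "(\<lambda>n. qabs p (X n)) \<longlonglongrightarrow> L" using qabs_conv[OF assms] convergent_def by blast
  have e: "qp_equiv p X ?R" by (rule rep_of[OF assms])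
  have "(\<lambda>n. qabs p (X n) - qabs p (?R n)) \<longlonglongrightarrow> 0"
  proof (rule Lim_null_comparison)
    show "(\<lambda>n. qabs p (X n - ?R n)) \<longlonglongrightarrow> 0" using e unfolding qp_equiv_def by simp
    show "\<forall>\<^sub>F n in sequentially. norm (qabs p (X n) - qabs p (?R n)) \<le> qabs p (X n - ?R n)"
      using qabs_rev[OF pr] by simp
  qed
  hence "(\<lambda>n. qabs p (?R n)) \<longlonglongrightarrow> L" using tendsto_diff[OF L] by fastforce
  hence "qp_abs p (qp_of p X) = L" unfolding qp_abs_def by (rule limI)
  thus ?thesis using L by simp
qed

end


context fixes p :: nat assumes pr: "prime p" begin

abbreviation "qsub a b \<equiv> qp_add p a (qp_neg p b)"

lemma cauchy_diff: "qp_cauchy p X \<Longrightarrow> qp_cauchy p Y \<Longrightarrow> qp_cauchy p (\<lambda>n. X n - Y n)"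
  using cauchy_add[OF pr, of X "\<lambda>n. - Y n"] cauchy_neg[OF pr, of Y] by simp

lemma sub_of0: "qp_cauchy p X \<Longrightarrow> qp_cauchy p Y \<Longrightarrow> qp_add p (qp_of p X) (qp_neg p (qp_of p Y)) = qp_of p (\<lambda>n. X n - Y n)"
  using add_of[OF pr, of X "\<lambda>n. - Y n"] cauchy_neg[OF pr, of Y] neg_of[OF pr, of Y] by simp

lemmas cau = cauchy_add[OF pr] cauchy_neg[OF pr] cauchy_mult[OF pr] cauchy_const[OF pr] cauchy_diff
lemmas ofs = sub_of0 add_of[OF pr] neg_of[OF pr] mult_of[OF pr]

lemma zero_in: "qp_zero p \<in> Qp p" unfolding qp_zero_def by (rule of_in[OF pr cauchy_const[OF pr]])
lemma one_in: "qp_one p \<in> Qp p" unfolding qp_one_def by (rule of_in[OF pr cauchy_const[OF pr]])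

lemma add_in: assumes "a \<in> Qp p" "b \<in> Qp p" shows "qp_add p a b \<in> Qp p"
proof -
  obtain X Y where "qp_cauchy p X" "a = qp_of p X" "qp_cauchy p Y" "b = qp_of p Y"
    using assms Qp_E[OF pr] by metis
  thus ?thesis by (simp add: ofs cau of_in[OF pr])
qed

lemma mult_in: assumes "a \<in> Qp p" "b \<in> Qp p" shows "qp_mult p a b \<in> Qp p"
proof -
  obtain X Y where "qp_cauchy p X" "a = qp_of p X" "qp_cauchy p Y" "b = qp_of p Y"
    using assms Qp_E[OF pr] by metis
  thus ?thesis by (simp add: ofs cau of_in[OF pr])
qed

lemma neg_in: assumes "a \<in> Qp p" shows "qp_neg p a \<in> Qp p"
proof -
  obtain X where "qp_cauchy p X" "a = qp_of p X" using assms Qp_E[OF pr] by metis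
  thus ?thesis by (simp add: ofs cau of_in[OF pr])
qed

lemma sub_in: "a \<in> Qp p \<Longrightarrow> b \<in> Qp p \<Longrightarrow> qsub a b \<in> Qp p"
  by (simp add: add_in neg_in)

lemma abs_nonneg: assumes "a \<in> Qp p" shows "qp_abs p a \<ge> 0"
proof -
  obtain X where X: "qp_cauchy p X" "a = qp_of p X" using assms Qp_E[OF pr] by metis
  show ?thesis using abs_of[OF pr X(1)] X(2) by (intro LIMSEQ_le_const[of "\<lambda>n. qabs p (X n)"]) (auto simp: qabs_nonneg)
qed

lemma abs_const: "qp_abs p (qp_of p (\<lambda>_. c)) = qabs p c"
  using abs_of[OF pr cauchy_const[OF pr, of c]] by (simp add: LIMSEQ_const_iff)

lemma abs_zero: "qp_abs p (qp_zero p) = 0" unfolding qp_zero_def abs_const by simp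
lemma abs_one: "qp_abs p (qp_one p) = 1" unfolding qp_one_def abs_const by (simp add: qabs_one[OF pr])

lemma abs_add: assumes "a \<in> Qp p" "b \<in> Qp p"
  shows "qp_abs p (qp_add p a b) \<le> max (qp_abs p a) (qp_abs p b)"
proof -
  obtain X Y where X: "qp_cauchy p X" "a = qp_of p X" and Y: "qp_cauchy p Y" "b = qp_of p Y"
    using assms Qp_E[OF pr] by metis
  have l1: "(\<lambda>n. qabs p (X n + Y n)) \<longlonglongrightarrow> qp_abs p (qp_add p a b)"
    using abs_of[OF pr cauchy_add[OF pr X(1) Y(1)]] X Y by (simp add: ofs)
  have l2: "(\<lambda>n. max (qabs p (X n)) (qabs p (Y n))) \<longlonglongrightarrow> max (qp_abs p a) (qp_abs p b)"
    unfolding X(2) Y(2) by (intro tendsto_max abs_of[OF pr X(1)] abs_of[OF pr Y(1)])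
  show ?thesis by (rule LIMSEQ_le[OF l1 l2]) (auto intro: qabs_add[OF pr])
qed

lemma abs_mult: assumes "a \<in> Qp p" "b \<in> Qp p"
  shows "qp_abs p (qp_mult p a b) = qp_abs p a * qp_abs p b"
proof -
  obtain X Y where X: "qp_cauchy p X" "a = qp_of p X" and Y: "qp_cauchy p Y" "b = qp_of p Y"
    using assms Qp_E[OF pr] by metis
  have l1: "(\<lambda>n. qabs p (X n * Y n)) \<longlonglongrightarrow> qp_abs p (qp_mult p a b)"
    using abs_of[OF pr cauchy_mult[OF pr X(1) Y(1)]] X Y by (simp add: ofs)
  have l2: "(\<lambda>n. qabs p (X n) * qabs p (Y n)) \<longlonglongrightarrow> qp_abs p a * qp_abs p b"
    unfolding X(2) Y(2) by (intro tendsto_mult abs_of[OF pr X(1)] abs_of[OF pr Y(1)])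
  show ?thesis using LIMSEQ_unique[OF l1] l2 by (simp add: qabs_mult[OF pr])
qed

lemma abs_neg: assumes "a \<in> Qp p" shows "qp_abs p (qp_neg p a) = qp_abs p a"
proof -
  obtain X where X: "qp_cauchy p X" "a = qp_of p X" using assms Qp_E[OF pr] by metis
  have l1: "(\<lambda>n. qabs p (- X n)) \<longlonglongrightarrow> qp_abs p (qp_neg p a)"
    using abs_of[OF pr cauchy_neg[OF pr X(1)]] X by (simp add: ofs)
  show ?thesis using LIMSEQ_unique[OF l1] abs_of[OF pr X(1)] X(2) by (simp add: qabs_minus[OF pr])
qed

lemma add_comm: assumes "a \<in> Qp p" "b \<in> Qp p" shows "qp_add p a b = qp_add p b a"
proof -
  obtain X Y where "qp_cauchy p X" "a = qp_of p X" "qp_cauchy p Y" "b = qp_of p Y"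
    using assms Qp_E[OF pr] by metis
  thus ?thesis by (simp add: ofs cau add.commute)
qed

lemma add_assoc: assumes "a \<in> Qp p" "b \<in> Qp p" "c \<in> Qp p"
  shows "qp_add p (qp_add p a b) c = qp_add p a (qp_add p b c)"
proof -
  obtain X Y Z where "qp_cauchy p X" "a = qp_of p X" "qp_cauchy p Y" "b = qp_of p Y" "qp_cauchy p Z" "c = qp_of p Z"
    using assms Qp_E[OF pr] by metis
  thus ?thesis by (simp add: ofs cau add.assoc)
qed

lemma add_zero: assumes "a \<in> Qp p" shows "qp_add p a (qp_zero p) = a"
proof -
  obtain X where "qp_cauchy p X" "a = qp_of p X" using assms Qp_E[OF pr] by metis
  thus ?thesis by (simp add: qp_zero_def ofs cau)
qed

lemma zero_add: assumes "a \<in> Qp p" shows "qp_add p (qp_zero p) a = a"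
  using add_comm[OF zero_in assms] add_zero[OF assms] by simp

lemma mult_zero: assumes "a \<in> Qp p" shows "qp_mult p a (qp_zero p) = qp_zero p"
proof -
  obtain X where "qp_cauchy p X" "a = qp_of p X" using assms Qp_E[OF pr] by metis
  thus ?thesis by (simp add: qp_zero_def ofs cau)
qed

lemma mult_one: assumes "a \<in> Qp p" shows "qp_mult p a (qp_one p) = a"
proof -
  obtain X where "qp_cauchy p X" "a = qp_of p X" using assms Qp_E[OF pr] by metis
  thus ?thesis by (simp add: qp_one_def ofs cau)
qed

lemma sub_mult: assumes "a \<in> Qp p" "b \<in> Qp p" "c \<in> Qp p"
  shows "qsub (qp_mult p a b) (qp_mult p a c) = qp_mult p a (qsub b c)"
proof -
  obtain X Y Z where "qp_cauchy p X" "a = qp_of p X" "qp_cauchy p Y" "b = qp_of p Y" "qp_cauchy p Z" "c = qp_of p Z"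
    using assms Qp_E[OF pr] by metis
  thus ?thesis by (simp add: ofs cau algebra_simps)
qed

lemma sub_add: assumes "a \<in> Qp p" "b \<in> Qp p" "c \<in> Qp p" "d \<in> Qp p"
  shows "qsub (qp_add p a b) (qp_add p c d) = qp_add p (qsub a c) (qsub b d)"
proof -
  obtain X Y Z W where "qp_cauchy p X" "a = qp_of p X" "qp_cauchy p Y" "b = qp_of p Y" "qp_cauchy p Z" "c = qp_of p Z"
    "qp_cauchy p W" "d = qp_of p W"
    using assms Qp_E[OF pr] by metis
  thus ?thesis by (simp add: ofs cau algebra_simps)
qed

lemma sub_tri: assumes "a \<in> Qp p" "b \<in> Qp p" "c \<in> Qp p"
  shows "qsub a c = qp_add p (qsub a b) (qsub b c)"
proof -
  obtain X Y Z where "qp_cauchy p X" "a = qp_of p X" "qp_cauchy p Y" "b = qp_of p Y" "qp_cauchy p Z" "c = qp_of p Z"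
    using assms Qp_E[OF pr] by metis
  thus ?thesis by (simp add: ofs cau algebra_simps)
qed

lemma sub_plus: assumes "a \<in> Qp p" "b \<in> Qp p"
  shows "a = qp_add p (qsub a b) b"
proof -
  obtain X Y where "qp_cauchy p X" "a = qp_of p X" "qp_cauchy p Y" "b = qp_of p Y"
    using assms Qp_E[OF pr] by metis
  thus ?thesis by (simp add: ofs cau algebra_simps)
qed

lemma sub_swap: assumes "a \<in> Qp p" "b \<in> Qp p"
  shows "qp_neg p (qsub a b) = qsub b a"
proof -
  obtain X Y where "qp_cauchy p X" "a = qp_of p X" "qp_cauchy p Y" "b = qp_of p Y"
    using assms Qp_E[OF pr] by metis
  thus ?thesis by (simp add: ofs cau algebra_simps)
qed

lemma abs_sub_sym: assumes "a \<in> Qp p" "b \<in> Qp p"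
  shows "qp_abs p (qsub a b) = qp_abs p (qsub b a)"
  using abs_neg[OF sub_in[OF assms]] sub_swap[OF assms] by simp

lemma abs_sub_tri: assumes "a \<in> Qp p" "b \<in> Qp p" "c \<in> Qp p"
  shows "qp_abs p (qsub a c) \<le> max (qp_abs p (qsub a b)) (qp_abs p (qsub b c))"
  using abs_add[OF sub_in[OF assms(1,2)] sub_in[OF assms(2,3)]] sub_tri[OF assms] by simp

lemma abs_le_sub: assumes "a \<in> Qp p" "b \<in> Qp p"
  shows "qp_abs p a \<le> max (qp_abs p (qsub a b)) (qp_abs p b)"
  using abs_add[OF sub_in[OF assms] assms(2)] sub_plus[OF assms] by simp

lemma sub_of: "qp_cauchy p X \<Longrightarrow> qp_cauchy p Y \<Longrightarrow> qsub (qp_of p X) (qp_of p Y) = qp_of p (\<lambda>n. X n - Y n)"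
  by (simp add: ofs cau)

end


context fixes p :: nat assumes pr: "prime p" begin

lemma rep_ok: assumes "a \<in> Qp p" shows "qp_cauchy p (qp_rep a)" "a = qp_of p (qp_rep a)"
proof -
  obtain Y where Y: "qp_cauchy p Y" "a = qp_of p Y" using Qp_E[OF pr assms] by metis
  have e: "qp_equiv p Y (qp_rep a)" using rep_of[OF pr Y(1)] Y(2) by simp
  thus "qp_cauchy p (qp_rep a)" unfolding qp_equiv_def by simp
  show "a = qp_of p (qp_rep a)" using qp_of_eq[OF pr e] Y(2) by simp
qed

lemma small_inv: assumes "e > 0" obtains N :: nat where "\<forall>n\<ge>N. 1 / real (Suc n) < e"
proof -
  obtain N :: nat where "N > 0" "inverse (real N) < e" using ex_inverse_of_nat_less[OF assms] by blast
  hence "\<forall>n\<ge>N. 1 / real (Suc n) < e"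
  proof (intro allI impI)
    fix n assume "N \<le> n"
    hence "1 / real (Suc n) \<le> inverse (real N)" using \<open>N > 0\<close> by (simp add: field_simps)
    thus "1 / real (Suc n) < e" using \<open>inverse (real N) < e\<close> by linarith
  qed
  thus ?thesis using that by blast
qed

lemma qp_complete:
  assumes a: "\<forall>j. a j \<in> Qp p"
  and C: "\<forall>e>0. \<exists>N. \<forall>m\<ge>N. \<forall>n\<ge>N. qp_abs p (qsub p (a m) (a n)) < e"
  shows "\<exists>b\<in>Qp p. (\<lambda>n. qp_abs p (qsub p (a n) b)) \<longlonglongrightarrow> 0"
proof -
  define X where "X j = qp_rep (a j)" for j
  have XC: "\<And>j. qp_cauchy p (X j)" and aX: "\<And>j. a j = qp_of p (X j)"
    unfolding X_def using rep_ok a by auto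
  have "\<forall>j. \<exists>n. \<forall>m\<ge>n. qabs p (X j m - X j n) < 1 / real (Suc j)"
  proof
    fix j
    obtain N where "\<forall>m\<ge>N. \<forall>n\<ge>N. qabs p (X j m - X j n) < 1 / real (Suc j)"
      using XC[of j] unfolding qp_cauchy_def by (meson divide_pos_pos of_nat_0_less_iff zero_less_Suc zero_less_one)
    thus "\<exists>n. \<forall>m\<ge>n. qabs p (X j m - X j n) < 1 / real (Suc j)" by blast
  qed
  then obtain nn where nn: "\<And>j m. m \<ge> nn j \<Longrightarrow> qabs p (X j m - X j (nn j)) < 1 / real (Suc j)"
    by metis
  define q where "q j = X j (nn j)" for j
  define c where "c j = qp_of p (\<lambda>_. q j)" for j
  have c_in: "c j \<in> Qp p" for j unfolding c_def by (rule of_in[OF pr cauchy_const[OF pr]])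
  have A: "qp_abs p (qsub p (a j) (c j)) \<le> 1 / real (Suc j)" for j
  proof -
    have "qsub p (a j) (c j) = qp_of p (\<lambda>m. X j m - q j)"
      unfolding aX c_def by (rule sub_of[OF pr XC cauchy_const[OF pr]])
    moreover have "(\<lambda>m. qabs p (X j m - q j)) \<longlonglongrightarrow> qp_abs p (qp_of p (\<lambda>m. X j m - q j))"
      by (rule abs_of[OF pr cauchy_diff[OF pr XC cauchy_const[OF pr]]])
    ultimately show ?thesis
    proof (intro LIMSEQ_le_const2[of "\<lambda>m. qabs p (X j m - q j)"])
      show "\<exists>N. \<forall>n\<ge>N. qabs p (X j n - q j) \<le> 1 / real (Suc j)"
        unfolding q_def using nn less_imp_le by blast
    qed simp
  qed
  have A': "qp_abs p (qsub p (c j) (a j)) \<le> 1 / real (Suc j)" for j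
    using A[of j] abs_sub_sym[OF pr c_in a[rule_format]] by simp
  have abs_c: "qp_abs p (qsub p (c i) (c j)) = qabs p (q i - q j)" for i j
    unfolding c_def sub_of[OF pr cauchy_const[OF pr] cauchy_const[OF pr]] by (rule abs_const[OF pr])
  have qC: "qp_cauchy p q" unfolding qp_cauchy_def
  proof (intro allI impI)
    fix e :: real assume "e > 0"
    obtain N1 where N1: "\<forall>n\<ge>N1. 1 / real (Suc n) < e" using small_inv[OF \<open>e>0\<close>] by blast
    obtain N2 where N2: "\<forall>m\<ge>N2. \<forall>n\<ge>N2. qp_abs p (qsub p (a m) (a n)) < e" using C \<open>e>0\<close> by blast
    show "\<exists>N. \<forall>m\<ge>N. \<forall>n\<ge>N. qabs p (q m - q n) < e"
    proof (intro exI allI impI)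
      fix i j assume ij: "max N1 N2 \<le> i" "max N1 N2 \<le> j"
      have "qp_abs p (qsub p (c i) (c j)) \<le> max (qp_abs p (qsub p (c i) (a i))) (qp_abs p (qsub p (a i) (c j)))"
        using abs_sub_tri[OF pr c_in a[rule_format] c_in] .
      moreover have "qp_abs p (qsub p (a i) (c j)) \<le> max (qp_abs p (qsub p (a i) (a j))) (qp_abs p (qsub p (a j) (c j)))"
        using abs_sub_tri[OF pr a[rule_format] a[rule_format] c_in] .
      moreover have "qp_abs p (qsub p (c i) (a i)) < e" using A'[of i] N1 ij by fastforce
      moreover have "qp_abs p (qsub p (a j) (c j)) < e" using A[of j] N1 ij by fastforce
      moreover have "qp_abs p (qsub p (a i) (a j)) < e" using N2 ij by auto
      ultimately show "qabs p (q i - q j) < e" unfolding abs_c by linarith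
    qed
  qed
  define b where "b = qp_of p q"
  have b_in: "b \<in> Qp p" unfolding b_def by (rule of_in[OF pr qC])
  have "(\<lambda>n. qp_abs p (qsub p (a n) b)) \<longlonglongrightarrow> 0"
  proof (rule LIMSEQ_I)
    fix e :: real assume "e > 0"
    hence e2: "e / 2 > 0" by simp
    obtain N1 where N1: "\<forall>n\<ge>N1. 1 / real (Suc n) < e / 2" using small_inv[OF e2] by blast
    obtain N2 where N2: "\<forall>m\<ge>N2. \<forall>n\<ge>N2. qabs p (q m - q n) < e / 2" using qC e2 unfolding qp_cauchy_def by blast
    show "\<exists>no. \<forall>n\<ge>no. norm (qp_abs p (qsub p (a n) b) - 0) < e"
    proof (intro exI allI impI)
      fix n assume n: "max N1 N2 \<le> n"
      have "qp_abs p (qsub p (c n) b) \<le> e / 2"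
      proof -
        have "qsub p (c n) b = qp_of p (\<lambda>m. q n - q m)"
          unfolding c_def b_def by (rule sub_of[OF pr cauchy_const[OF pr] qC])
        moreover have "(\<lambda>m. qabs p (q n - q m)) \<longlonglongrightarrow> qp_abs p (qp_of p (\<lambda>m. q n - q m))"
          by (rule abs_of[OF pr cauchy_diff[OF pr cauchy_const[OF pr] qC]])
        ultimately show ?thesis
          by (intro LIMSEQ_le_const2[of "\<lambda>m. qabs p (q n - q m)"])
             (use N2 n in \<open>auto intro!: exI[of _ N2] less_imp_le\<close>)
      qed
      moreover have "qp_abs p (qsub p (a n) (c n)) < e / 2" using A[of n] N1 n by fastforce
      moreover have "qp_abs p (qsub p (a n) b) \<le> max (qp_abs p (qsub p (a n) (c n))) (qp_abs p (qsub p (c n) b))"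
        using abs_sub_tri[OF pr a[rule_format] c_in b_in] .
      moreover have "qp_abs p (qsub p (a n) b) \<ge> 0" by (rule abs_nonneg[OF pr sub_in[OF pr a[rule_format] b_in]])
      ultimately show "norm (qp_abs p (qsub p (a n) b) - 0) < e" using \<open>e > 0\<close>
        unfolding max_def by (simp split: if_splits)
    qed
  qed
  thus ?thesis using b_in by blast
qed

end


definition inQ :: "nat \<Rightarrow> pser \<Rightarrow> bool" where "inQ p f \<longleftrightarrow> (\<forall>k. f k \<in> Qp p)"
definition bd :: "nat \<Rightarrow> real \<Rightarrow> pser \<Rightarrow> bool" where
  "bd p r f \<longleftrightarrow> bdd_above (range (\<lambda>k. qp_abs p (f k) * r ^ k))"

lemma gn_upper: "bd p r f \<Longrightarrow> qp_abs p (f k) * r ^ k \<le> gnorm p r f"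
  unfolding bd_def gnorm_def by (rule cSUP_upper) auto

lemma gn_least: "(\<And>k. qp_abs p (f k) * r ^ k \<le> C) \<Longrightarrow> gnorm p r f \<le> C"
  unfolding gnorm_def by (rule cSUP_least) auto

lemma bd_I: "(\<And>k. qp_abs p (f k) * r ^ k \<le> C) \<Longrightarrow> bd p r f"
  unfolding bd_def by (rule bdd_aboveI2) auto

context fixes p :: nat assumes pr: "prime p" begin

lemma gn_nonneg: assumes "inQ p f" "bd p r f" "r \<ge> 0" shows "gnorm p r f \<ge> 0"
proof -
  have "0 \<le> qp_abs p (f 0) * r ^ 0" using abs_nonneg[OF pr] assms(1) unfolding inQ_def by simp
  also have "\<dots> \<le> gnorm p r f" by (rule gn_upper[OF assms(2)])
  finally show ?thesis .
qed

lemma foldr_in: "(\<forall>x\<in>set xs. h x \<in> Qp p) \<Longrightarrow> a \<in> Qp p \<Longrightarrow> foldr (qp_add p) (map h xs) a \<in> Qp p"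
  by (induction xs) (auto intro: add_in[OF pr])

lemma foldr_bound:
  assumes "\<forall>x\<in>set xs. h x \<in> Qp p \<and> qp_abs p (h x) \<le> C" "C \<ge> 0"
  shows "qp_abs p (foldr (qp_add p) (map h xs) (qp_zero p)) \<le> C"
  using assms
proof (induction xs)
  case Nil thus ?case by (simp add: abs_zero[OF pr])
next
  case (Cons x xs)
  have i: "foldr (qp_add p) (map h xs) (qp_zero p) \<in> Qp p" using Cons.prems by (intro foldr_in zero_in[OF pr]) auto
  have "qp_abs p (qp_add p (h x) (foldr (qp_add p) (map h xs) (qp_zero p)))
        \<le> max (qp_abs p (h x)) (qp_abs p (foldr (qp_add p) (map h xs) (qp_zero p)))"
    using Cons.prems i by (intro abs_add[OF pr]) auto
  moreover have "max (qp_abs p (h x)) (qp_abs p (foldr (qp_add p) (map h xs) (qp_zero p))) \<le> C"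
    using Cons by simp
  ultimately show ?case by (simp only: foldr.simps list.map o_apply)
qed

lemma sub_zero_zero: "qsub p (qp_zero p) (qp_zero p) = qp_zero p"
  unfolding qp_zero_def by (simp add: sub_of[OF pr cauchy_const[OF pr] cauchy_const[OF pr]])

lemma foldr_sub:
  assumes "\<forall>x\<in>set xs. h x \<in> Qp p \<and> g x \<in> Qp p"
  shows "qsub p (foldr (qp_add p) (map h xs) (qp_zero p)) (foldr (qp_add p) (map g xs) (qp_zero p))
       = foldr (qp_add p) (map (\<lambda>x. qsub p (h x) (g x)) xs) (qp_zero p)"
  using assms
proof (induction xs)
  case Nil thus ?case by (simp add: sub_zero_zero)
next
  case (Cons x xs)
  have i: "foldr (qp_add p) (map h xs) (qp_zero p) \<in> Qp p" "foldr (qp_add p) (map g xs) (qp_zero p) \<in> Qp p"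
    using Cons.prems by (intro foldr_in zero_in[OF pr]; auto)+
  show ?case using Cons sub_add[OF pr _ i(1) _ i(2), of "h x" "g x"] by simp
qed

lemma foldr_zeros:
  assumes "\<forall>x\<in>set xs. h x = qp_zero p" "a \<in> Qp p"
  shows "foldr (qp_add p) (map h xs) a = a"
  using assms by (induction xs) (auto simp: zero_add[OF pr])

lemma mult_inQ: "inQ p f \<Longrightarrow> inQ p g \<Longrightarrow> inQ p (ps_mult p f g)"
  unfolding inQ_def ps_mult_def by (auto intro!: foldr_in zero_in[OF pr] mult_in[OF pr] add_in[OF pr])

lemma sub_inQ: "inQ p f \<Longrightarrow> inQ p g \<Longrightarrow> inQ p (ps_sub p f g)"
  unfolding inQ_def ps_sub_def by (auto intro!: sub_in[OF pr])

lemma one_inQ: "inQ p (ps_one p)"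
  unfolding inQ_def ps_one_def by (auto intro: one_in[OF pr] zero_in[OF pr])

lemma coef_mult_bound:
  assumes f: "inQ p f" "bd p r f" and g: "inQ p g" "bd p r g" and r: "r > 0"
  shows "qp_abs p (ps_mult p f g k) * r ^ k \<le> gnorm p r f * gnorm p r g"
proof -
  let ?C = "gnorm p r f * gnorm p r g / r ^ k"
  have C0: "?C \<ge> 0" using gn_nonneg f g r by auto
  have "qp_abs p (ps_mult p f g k) \<le> ?C"
    unfolding ps_mult_def
  proof (rule foldr_bound[OF _ C0], intro ballI conjI)
    fix i assume "i \<in> set [0..<Suc k]"
    hence ik: "i \<le> k" by auto
    show "qp_mult p (f i) (g (k - i)) \<in> Qp p" using f g unfolding inQ_def by (auto intro: mult_in[OF pr])
    have "qp_abs p (qp_mult p (f i) (g (k - i))) * r ^ k = (qp_abs p (f i) * r ^ i) * (qp_abs p (g (k - i)) * r ^ (k - i))"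
      using f g ik unfolding inQ_def by (simp add: abs_mult[OF pr] power_add[symmetric])
    also have "\<dots> \<le> gnorm p r f * gnorm p r g"
      using f g r by (intro mult_mono gn_upper) (auto intro!: mult_nonneg_nonneg abs_nonneg[OF pr] simp: inQ_def gn_nonneg)
    finally show "qp_abs p (qp_mult p (f i) (g (k - i))) \<le> ?C" using r by (simp add: field_simps)
  qed
  thus ?thesis using r by (simp add: field_simps)
qed

lemma mult_bd: assumes "inQ p f" "bd p r f" "inQ p g" "bd p r g" "r > 0"
  shows "bd p r (ps_mult p f g)" "gnorm p r (ps_mult p f g) \<le> gnorm p r f * gnorm p r g"
  using coef_mult_bound[OF assms] by (auto intro: bd_I gn_least)

lemma mult_sub: assumes "inQ p f" "inQ p g" "inQ p h"
  shows "ps_sub p (ps_mult p f g) (ps_mult p f h) = ps_mult p f (ps_sub p g h)"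
proof (rule ext)
  fix k
  have "ps_sub p (ps_mult p f g) (ps_mult p f h) k =
     foldr (qp_add p) (map (\<lambda>i. qsub p (qp_mult p (f i) (g (k - i))) (qp_mult p (f i) (h (k - i)))) [0..<Suc k]) (qp_zero p)"
    unfolding ps_sub_def ps_mult_def using assms unfolding inQ_def
    by (subst foldr_sub) (auto intro: mult_in[OF pr])
  also have "\<dots> = ps_mult p f (ps_sub p g h) k"
    unfolding ps_mult_def ps_sub_def using assms unfolding inQ_def
    by (intro arg_cong2[where f="\<lambda>a b. foldr (qp_add p) a b"] map_cong refl sub_mult[OF pr]) auto
  finally show "ps_sub p (ps_mult p f g) (ps_mult p f h) k = ps_mult p f (ps_sub p g h) k" .
qed

lemma mult_one_ps: assumes "inQ p f" shows "ps_mult p f (ps_one p) = f"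
proof (rule ext)
  fix k
  have fk: "f k \<in> Qp p" using assms unfolding inQ_def by auto
  have "ps_mult p f (ps_one p) k = foldr (qp_add p) (map (\<lambda>i. qp_mult p (f i) (ps_one p (k - i))) [0..<k])
          (qp_add p (qp_mult p (f k) (ps_one p 0)) (qp_zero p))"
    unfolding ps_mult_def by simp
  also have "\<dots> = foldr (qp_add p) (map (\<lambda>i. qp_mult p (f i) (ps_one p (k - i))) [0..<k]) (f k)"
    using fk by (simp add: ps_one_def mult_one[OF pr] add_zero[OF pr])
  also have "\<dots> = f k"
    using assms fk unfolding inQ_def by (intro foldr_zeros) (auto simp: ps_one_def mult_zero[OF pr])
  finally show "ps_mult p f (ps_one p) k = f k" .
qed

lemma sub_bd: assumes "inQ p f" "bd p r f" "inQ p g" "bd p r g" "r \<ge> 0"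
  shows "bd p r (ps_sub p f g)"
proof (rule bd_I)
  fix k
  have "qp_abs p (ps_sub p f g k) \<le> max (qp_abs p (f k)) (qp_abs p (g k))"
    using assms unfolding ps_sub_def inQ_def by (metis abs_add[OF pr] abs_neg[OF pr] neg_in[OF pr])
  hence "qp_abs p (ps_sub p f g k) * r ^ k \<le> max (qp_abs p (f k)) (qp_abs p (g k)) * r ^ k"
    using assms by (intro mult_right_mono) auto
  also have "\<dots> \<le> gnorm p r f + gnorm p r g"
    using gn_upper[OF assms(2), of k] gn_upper[OF assms(4), of k] gn_nonneg[OF assms(1,2,5)] gn_nonneg[OF assms(3,4,5)]
    by (simp add: max_mult_distrib_right[symmetric] max_def)
  finally show "qp_abs p (ps_sub p f g k) * r ^ k \<le> gnorm p r f + gnorm p r g" .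
qed

lemma one_bd: assumes "r \<ge> 0" shows "bd p r (ps_one p)" "gnorm p r (ps_one p) \<le> 1"
proof -
  have "qp_abs p (ps_one p k) * r ^ k \<le> 1" for k
    by (cases k) (auto simp: ps_one_def abs_one[OF pr] abs_zero[OF pr])
  thus "bd p r (ps_one p)" "gnorm p r (ps_one p) \<le> 1" by (auto intro: bd_I gn_least)
qed

lemma sub_tri_ps:
  assumes "inQ p f" "inQ p g" "inQ p h" "bd p r (ps_sub p f g)" "bd p r (ps_sub p g h)" "r \<ge> 0"
  shows "gnorm p r (ps_sub p f h) \<le> max (gnorm p r (ps_sub p f g)) (gnorm p r (ps_sub p g h))"
proof (rule gn_least)
  fix k
  have "qp_abs p (ps_sub p f h k) \<le> max (qp_abs p (ps_sub p f g k)) (qp_abs p (ps_sub p g h k))"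
    using assms unfolding ps_sub_def inQ_def by (intro abs_sub_tri[OF pr]) auto
  hence "qp_abs p (ps_sub p f h k) * r ^ k \<le> max (qp_abs p (ps_sub p f g k)) (qp_abs p (ps_sub p g h k)) * r ^ k"
    using assms by (intro mult_right_mono) auto
  also have "\<dots> = max (qp_abs p (ps_sub p f g k) * r ^ k) (qp_abs p (ps_sub p g h k) * r ^ k)"
    using assms by (simp add: max_mult_distrib_right)
  also have "\<dots> \<le> max (gnorm p r (ps_sub p f g)) (gnorm p r (ps_sub p g h))"
    using gn_upper[OF assms(4)] gn_upper[OF assms(5)] by (intro max.mono)
  finally show "qp_abs p (ps_sub p f h k) * r ^ k \<le> max (gnorm p r (ps_sub p f g)) (gnorm p r (ps_sub p g h))" .
qed

lemma norm_le_sub: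
  assumes "inQ p f" "inQ p g" "bd p r (ps_sub p f g)" "bd p r g" "r \<ge> 0"
  shows "gnorm p r f \<le> max (gnorm p r (ps_sub p f g)) (gnorm p r g)"
proof (rule gn_least)
  fix k
  have "qp_abs p (f k) \<le> max (qp_abs p (ps_sub p f g k)) (qp_abs p (g k))"
    using assms unfolding ps_sub_def inQ_def by (intro abs_le_sub[OF pr]) auto
  hence "qp_abs p (f k) * r ^ k \<le> max (qp_abs p (ps_sub p f g k)) (qp_abs p (g k)) * r ^ k"
    using assms by (intro mult_right_mono) auto
  also have "\<dots> = max (qp_abs p (ps_sub p f g k) * r ^ k) (qp_abs p (g k) * r ^ k)"
    using assms by (simp add: max_mult_distrib_right)
  also have "\<dots> \<le> max (gnorm p r (ps_sub p f g)) (gnorm p r g)"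
    using gn_upper[OF assms(3)] gn_upper[OF assms(4)] by (intro max.mono)
  finally show "qp_abs p (f k) * r ^ k \<le> max (gnorm p r (ps_sub p f g)) (gnorm p r g)" .
qed

end


definition FF :: "nat \<Rightarrow> (nat \<Rightarrow> pser) \<Rightarrow> nat list \<Rightarrow> pser \<Rightarrow> pser" where
  "FF p G xs u = foldr (\<lambda>n acc. ps_mult p (G n) acc) xs u"

lemma FF_Nil[simp]: "FF p G [] u = u" by (simp add: FF_def)
lemma FF_Cons[simp]: "FF p G (x # xs) u = ps_mult p (G x) (FF p G xs u)" by (simp add: FF_def)
lemma FF_append: "FF p G (xs @ ys) u = FF p G xs (FF p G ys u)" by (simp add: FF_def)

context fixes p :: nat assumes pr: "prime p" begin

lemma FF_props:
  assumes "\<forall>n\<in>set xs. inQ p (G n) \<and> bd p r (G n)" "inQ p u" "bd p r u" "r > 0"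
  shows "inQ p (FF p G xs u) \<and> bd p r (FF p G xs u) \<and>
         gnorm p r (FF p G xs u) \<le> (\<Prod>n\<leftarrow>xs. gnorm p r (G n)) * gnorm p r u"
  using assms(1)
proof (induction xs)
  case Nil thus ?case using assms by simp
next
  case (Cons x xs)
  have IH: "inQ p (FF p G xs u)" "bd p r (FF p G xs u)"
     "gnorm p r (FF p G xs u) \<le> (\<Prod>n\<leftarrow>xs. gnorm p r (G n)) * gnorm p r u" using Cons by auto
  have Gx: "inQ p (G x)" "bd p r (G x)" using Cons.prems by auto
  have g0: "gnorm p r (G x) \<ge> 0" using gn_nonneg[OF pr Gx] assms(4) by simp
  have "gnorm p r (ps_mult p (G x) (FF p G xs u)) \<le> gnorm p r (G x) * gnorm p r (FF p G xs u)"
    using mult_bd[OF pr Gx IH(1,2) assms(4)] by simp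
  also have "\<dots> \<le> gnorm p r (G x) * ((\<Prod>n\<leftarrow>xs. gnorm p r (G n)) * gnorm p r u)"
    using IH(3) g0 by (rule mult_left_mono)
  finally show ?case using mult_bd[OF pr Gx IH(1,2) assms(4)] mult_inQ[OF pr Gx(1) IH(1)]
    by (simp add: mult.assoc)
qed

lemma FF_diff:
  assumes "\<forall>n\<in>set xs. inQ p (G n) \<and> bd p r (G n)" "inQ p u" "bd p r u" "inQ p v" "bd p r v" "r > 0"
  shows "gnorm p r (ps_sub p (FF p G xs u) (FF p G xs v)) \<le> (\<Prod>n\<leftarrow>xs. gnorm p r (G n)) * gnorm p r (ps_sub p u v)"
  using assms(1)
proof (induction xs)
  case Nil thus ?case by simp
next
  case (Cons x xs)
  have Gx: "inQ p (G x)" "bd p r (G x)" using Cons.prems by auto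
  have U: "inQ p (FF p G xs u)" "bd p r (FF p G xs u)" using FF_props[OF _ assms(2,3,6)] Cons.prems by auto
  have V: "inQ p (FF p G xs v)" "bd p r (FF p G xs v)" using FF_props[OF _ assms(4,5,6)] Cons.prems by auto
  have S: "inQ p (ps_sub p (FF p G xs u) (FF p G xs v))" "bd p r (ps_sub p (FF p G xs u) (FF p G xs v))"
    using sub_inQ[OF pr U(1) V(1)] sub_bd[OF pr U V] assms(6) by auto
  have g0: "gnorm p r (G x) \<ge> 0" using gn_nonneg[OF pr Gx] assms(6) by simp
  have "gnorm p r (ps_sub p (FF p G (x # xs) u) (FF p G (x # xs) v))
      = gnorm p r (ps_mult p (G x) (ps_sub p (FF p G xs u) (FF p G xs v)))"
    using mult_sub[OF pr Gx(1) U(1) V(1)] by simp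
  also have "\<dots> \<le> gnorm p r (G x) * gnorm p r (ps_sub p (FF p G xs u) (FF p G xs v))"
    using mult_bd[OF pr Gx S assms(6)] by simp
  also have "\<dots> \<le> gnorm p r (G x) * ((\<Prod>n\<leftarrow>xs. gnorm p r (G n)) * gnorm p r (ps_sub p u v))"
    using Cons g0 by (intro mult_left_mono) auto
  finally show ?case by (simp add: mult.assoc)
qed

lemma sub_self_ps: assumes "inQ p f" shows "gnorm p r (ps_sub p f f) = 0" "bd p r (ps_sub p f f)"
proof -
  have z: "qp_abs p (ps_sub p f f k) = 0" for k
  proof -
    obtain X where X: "qp_cauchy p X" "f k = qp_of p X" using assms Qp_E[OF pr] unfolding inQ_def by metis
    show ?thesis unfolding ps_sub_def X(2) sub_of[OF pr X(1) X(1)]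
      using abs_const[OF pr, of 0] by simp
  qed
  show "bd p r (ps_sub p f f)" by (rule bd_I[of _ _ _ 0]) (simp add: z)
  have "gnorm p r (ps_sub p f f) \<le> 0" by (rule gn_least) (simp add: z)
  moreover have "gnorm p r (ps_sub p f f) \<ge> 0"
    using gn_upper[OF \<open>bd p r (ps_sub p f f)\<close>, of 0] z by simp
  ultimately show "gnorm p r (ps_sub p f f) = 0" by simp
qed

end


lemma geo_sum_bound:
  fixes c q :: real and m0 :: nat and S :: "nat set"
  assumes "c \<ge> 0" "0 < q" "q < 1" "finite S"
  shows "(\<Sum>n\<in>S. (if m0 \<le> n then c * q ^ (n - m0) else 0)) \<le> c / (1 - q)"
proof -
  define f where "f n = (if m0 \<le> n then c * q ^ (n - m0) else 0)" for n
  have sh: "(\<lambda>n. f (n + m0)) = (\<lambda>n. c * q ^ n)" by (simp add: f_def)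
  have s1: "summable (\<lambda>n. c * q ^ n)" using assms by (intro summable_mult summable_geometric) auto
  hence s: "summable f" using summable_iff_shift[of f m0] sh by simp
  have "suminf f = (\<Sum>n. f (n + m0)) + (\<Sum>i<m0. f i)" by (rule suminf_split_initial_segment[OF s])
  also have "(\<Sum>i<m0. f i) = 0" by (simp add: f_def)
  also have "(\<Sum>n. f (n + m0)) = c / (1 - q)" unfolding sh using assms
    by (simp add: suminf_mult summable_geometric suminf_geometric)
  finally have "suminf f = c / (1 - q)" by simp
  moreover have "sum f S \<le> suminf f" using s assms by (intro sum_le_suminf) (auto simp: f_def)
  ultimately show ?thesis by (simp add: f_def)
qed

lemma prod_if_bound:
  fixes a :: real and S :: "nat set"
  assumes "a \<ge> 1" "finite S"
  shows "(\<Prod>n\<in>S. (if n < m0 then a else 1)) \<le> a ^ m0"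
proof -
  have "(\<Prod>n\<in>S. (if n < m0 then a else 1)) = (\<Prod>n\<in>S \<inter> {x. x < m0}. a) * (\<Prod>n\<in>S \<inter> - {x. x < m0}. 1)"
    by (rule prod.If_cases[OF assms(2)])
  also have "\<dots> = a ^ card (S \<inter> {x. x < m0})" by simp
  also have "\<dots> \<le> a ^ m0"
  proof (rule power_increasing[OF _ assms(1)])
    have "card (S \<inter> {x. x < m0}) \<le> card {..<m0}" by (rule card_mono) auto
    thus "card (S \<inter> {x. x < m0}) \<le> m0" by simp
  qed
  finally show ?thesis .
qed

context
  fixes p :: nat and lam mu nu :: real and G :: "nat \<Rightarrow> pser"
  assumes pr: "prime p" and lam: "lam > 0" and mu: "mu \<ge> 0"
  and GQ: "\<And>n. n \<ge> 1 \<Longrightarrow> inQ p (G n)"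
  and GB: "\<And>n r. n \<ge> 1 \<Longrightarrow> 0 < r \<Longrightarrow> r < 1 \<Longrightarrow> bd p r (G n)"
  and T1: "\<And>n r. n \<ge> 1 \<Longrightarrow> 0 < r \<Longrightarrow> r < 1 \<Longrightarrow> gnorm p r (G n) \<le> real p powr mu"
  and T2: "\<And>n r. 0 < r \<Longrightarrow> r < 1 \<Longrightarrow> n \<ge> 1 \<Longrightarrow> n \<ge> n0 p r \<Longrightarrow>
      gnorm p r (ps_sub p (G n) (ps_one p)) \<le> real p powr nu * real p powr (- lam * (real n - real (n0 p r)))"
begin

definition "cc = real p powr nu"
definition "qq = real p powr (- lam)"
definition "Bc = exp (cc / (1 - qq))"
definition "Mr r = (real p powr mu) ^ (n0 p r) * Bc"
definition "EE r N = Mr r * cc * qq ^ (Suc N - n0 p r)"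
definition "PP N = pprod p G N"

lemma p1: "real p > 1" using pr prime_gt_1_nat by auto

lemma qq: "0 < qq" "qq < 1" unfolding qq_def using p1 lam by (auto intro: powr_less_one)
lemma cc: "cc > 0" unfolding cc_def using p1 by simp
lemma Bc: "Bc \<ge> 1" unfolding Bc_def using cc qq by simp
lemma Mr: "Mr r > 0" unfolding Mr_def using Bc p1 by simp

lemma pmu1: "real p powr mu \<ge> 1" using p1 mu by (simp add: ge_one_powr_ge_zero)

lemma powr_q: assumes "n \<ge> m" shows "real p powr (- lam * (real n - real m)) = qq ^ (n - m)"
proof -
  have "real p powr (- lam * (real n - real m)) = (real p powr (- lam)) powr (real (n - m))"
    using assms by (simp add: powr_powr of_nat_diff)
  also have "\<dots> = qq ^ (n - m)" unfolding qq_def using p1 by (simp add: powr_realpow)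
  finally show ?thesis .
qed

lemma G_le: assumes "n \<ge> 1" "0 < r" "r < 1" "n \<ge> n0 p r"
  shows "gnorm p r (G n) \<le> 1 + cc * qq ^ (n - n0 p r)"
proof -
  have S: "bd p r (ps_sub p (G n) (ps_one p))"
    using sub_bd[OF pr GQ GB one_inQ[OF pr] one_bd(1)[OF pr]] assms by auto
  have "gnorm p r (G n) \<le> max (gnorm p r (ps_sub p (G n) (ps_one p))) (gnorm p r (ps_one p))"
    using norm_le_sub[OF pr GQ one_inQ[OF pr] S one_bd(1)[OF pr]] assms by auto
  moreover have "gnorm p r (ps_sub p (G n) (ps_one p)) \<le> cc * qq ^ (n - n0 p r)"
    using T2[OF assms(2,3,1,4)] powr_q[OF assms(4)] unfolding cc_def by simp
  moreover have "gnorm p r (ps_one p) \<le> 1" using one_bd(2)[OF pr] assms by auto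
  moreover have "cc * qq ^ (n - n0 p r) \<ge> 0" using cc qq by simp
  ultimately show ?thesis by linarith
qed

lemma prod_G_le: assumes "0 < r" "r < 1"
  shows "(\<Prod>n\<leftarrow>[1..<Suc N]. gnorm p r (G n)) \<le> Mr r"
proof -
  let ?m0 = "n0 p r"
  define A where "A n = (if n < ?m0 then real p powr mu else 1)" for n
  define f where "f n = (if ?m0 \<le> n then cc * qq ^ (n - ?m0) else 0)" for n
  have f0: "f n \<ge> 0" for n unfolding f_def using cc qq by simp
  have "(\<Prod>n\<leftarrow>[1..<Suc N]. gnorm p r (G n)) = (\<Prod>n\<in>{1..<Suc N}. gnorm p r (G n))"
    by (metis distinct_upt set_upt prod.distinct_set_conv_list)
  also have "\<dots> \<le> (\<Prod>n\<in>{1..<Suc N}. A n * (1 + f n))"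
  proof (rule prod_mono)
    fix n assume "n \<in> {1..<Suc N}"
    hence n1: "n \<ge> 1" by auto
    show "0 \<le> gnorm p r (G n) \<and> gnorm p r (G n) \<le> A n * (1 + f n)"
    proof
      show "0 \<le> gnorm p r (G n)" using gn_nonneg[OF pr GQ GB] n1 assms by auto
      show "gnorm p r (G n) \<le> A n * (1 + f n)"
      proof (cases "n < ?m0")
        case True thus ?thesis using T1[OF n1 assms] by (simp add: A_def f_def)
      next
        case False thus ?thesis using G_le[OF n1 assms] by (simp add: A_def f_def)
      qed
    qed
  qed
  also have "\<dots> = (\<Prod>n\<in>{1..<Suc N}. A n) * (\<Prod>n\<in>{1..<Suc N}. 1 + f n)"
    by (rule prod.distrib)
  also have "\<dots> \<le> (real p powr mu) ^ ?m0 * Bc"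
  proof (rule mult_mono)
    show "(\<Prod>n\<in>{1..<Suc N}. A n) \<le> (real p powr mu) ^ ?m0"
      unfolding A_def by (rule prod_if_bound[OF pmu1]) auto
    have "(\<Prod>n\<in>{1..<Suc N}. 1 + f n) \<le> (\<Prod>n\<in>{1..<Suc N}. exp (f n))"
      by (rule prod_mono) (use f0 in \<open>auto intro: add_nonneg_nonneg\<close>)
    also have "\<dots> = exp (\<Sum>n\<in>{1..<Suc N}. f n)" by (rule exp_sum[symmetric, OF finite_atLeastLessThan])
    also have "\<dots> \<le> Bc" unfolding Bc_def f_def
      using geo_sum_bound[of cc qq "{1..<Suc N}" ?m0] cc qq by simp
    finally show "(\<Prod>n\<in>{1..<Suc N}. 1 + f n) \<le> Bc" .
    show "0 \<le> (real p powr mu) ^ ?m0" by simp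
    show "0 \<le> (\<Prod>n\<in>{1..<Suc N}. 1 + f n)" using f0 by (intro prod_nonneg) (simp add: add_nonneg_nonneg)
  qed
  finally show ?thesis unfolding Mr_def .
qed

lemma G_set: assumes "0 < r" "r < 1" shows "\<forall>n\<in>set [1..<Suc N]. inQ p (G n) \<and> bd p r (G n)"
  using GQ GB assms by auto

lemma PP_FF: "PP N = FF p G [1..<Suc N] (ps_one p)" unfolding PP_def pprod_def FF_def ..

lemma PP_props: assumes "0 < r" "r < 1"
  shows "inQ p (PP N)" "bd p r (PP N)" "gnorm p r (PP N) \<le> Mr r"
proof -
  have h: "inQ p (PP N) \<and> bd p r (PP N) \<and> gnorm p r (PP N) \<le> (\<Prod>n\<leftarrow>[1..<Suc N]. gnorm p r (G n)) * gnorm p r (ps_one p)"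
    unfolding PP_FF using FF_props[OF pr G_set[OF assms] one_inQ[OF pr] one_bd(1)[OF pr]] assms by auto
  thus "inQ p (PP N)" "bd p r (PP N)" by auto
  have "(\<Prod>n\<leftarrow>[1..<Suc N]. gnorm p r (G n)) * gnorm p r (ps_one p) \<le> Mr r * 1"
  proof (rule mult_mono)
    show "(\<Prod>n\<leftarrow>[1..<Suc N]. gnorm p r (G n)) \<le> Mr r" by (rule prod_G_le[OF assms])
    show "gnorm p r (ps_one p) \<le> 1" using one_bd(2)[OF pr] assms by auto
    show "0 \<le> Mr r" using Mr[of r] by simp
    show "0 \<le> gnorm p r (ps_one p)" using gn_nonneg[OF pr one_inQ[OF pr] one_bd(1)[OF pr]] assms by auto
  qed
  thus "gnorm p r (PP N) \<le> Mr r" using h by simp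
qed

lemma PP_step: assumes "0 < r" "r < 1" "Suc N \<ge> n0 p r"
  shows "gnorm p r (ps_sub p (PP (Suc N)) (PP N)) \<le> EE r N"
proof -
  have GS: "inQ p (G (Suc N))" "bd p r (G (Suc N))" using GQ GB assms by auto
  have u: "[1..<Suc (Suc N)] = [1..<Suc N] @ [Suc N]" by simp
  have "PP (Suc N) = FF p G [1..<Suc N] (FF p G [Suc N] (ps_one p))"
    unfolding PP_FF u FF_append ..
  also have "FF p G [Suc N] (ps_one p) = G (Suc N)" using mult_one_ps[OF pr GS(1)] by simp
  finally have e: "PP (Suc N) = FF p G [1..<Suc N] (G (Suc N))" .
  have "gnorm p r (ps_sub p (PP (Suc N)) (PP N)) \<le>
      (\<Prod>n\<leftarrow>[1..<Suc N]. gnorm p r (G n)) * gnorm p r (ps_sub p (G (Suc N)) (ps_one p))"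
    unfolding e unfolding PP_FF
    by (rule FF_diff[OF pr G_set[OF assms(1,2)] GS one_inQ[OF pr] one_bd(1)[OF pr less_imp_le[OF assms(1)]] assms(1)])
  also have "\<dots> \<le> Mr r * (cc * qq ^ (Suc N - n0 p r))"
  proof (rule mult_mono)
    show "(\<Prod>n\<leftarrow>[1..<Suc N]. gnorm p r (G n)) \<le> Mr r" by (rule prod_G_le[OF assms(1,2)])
    show "gnorm p r (ps_sub p (G (Suc N)) (ps_one p)) \<le> cc * qq ^ (Suc N - n0 p r)"
      using T2[OF assms(1,2) _ assms(3)] powr_q[OF assms(3)] unfolding cc_def by simp
    show "0 \<le> Mr r" using Mr[of r] by simp
    have "bd p r (ps_sub p (G (Suc N)) (ps_one p))"
      using sub_bd[OF pr GS one_inQ[OF pr] one_bd(1)[OF pr]] assms by auto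
    thus "0 \<le> gnorm p r (ps_sub p (G (Suc N)) (ps_one p))"
      using gn_nonneg[OF pr sub_inQ[OF pr GS(1) one_inQ[OF pr]]] assms by auto
  qed
  finally show ?thesis unfolding EE_def by (simp add: mult.assoc)
qed

lemma EE_mono: "N \<le> M \<Longrightarrow> n0 p r \<le> N \<Longrightarrow> EE r M \<le> EE r N"
  unfolding EE_def using Mr[of r] cc qq
  by (intro mult_left_mono power_decreasing) auto

lemma EE_nonneg: "EE r N \<ge> 0" unfolding EE_def using Mr[of r] cc qq by simp

lemma PP_tail: assumes "0 < r" "r < 1" "n0 p r \<le> N" "N \<le> K"
  shows "gnorm p r (ps_sub p (PP K) (PP N)) \<le> EE r N \<and> bd p r (ps_sub p (PP K) (PP N))"
  using assms(4)
proof (induction K rule: dec_induct)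
  case base
  thus ?case using sub_self_ps[OF pr PP_props(1)[OF assms(1,2)]] EE_nonneg by simp
next
  case (step M)
  have I: "\<And>K. inQ p (PP K)" "\<And>K. bd p r (PP K)" using PP_props assms by auto
  have b1: "bd p r (ps_sub p (PP (Suc M)) (PP M))" using sub_bd[OF pr I(1) I(2) I(1) I(2)] assms by simp
  have b2: "bd p r (ps_sub p (PP M) (PP N))" using step by simp
  have "gnorm p r (ps_sub p (PP (Suc M)) (PP N)) \<le> max (gnorm p r (ps_sub p (PP (Suc M)) (PP M))) (gnorm p r (ps_sub p (PP M) (PP N)))"
    by (rule sub_tri_ps[OF pr I(1) I(1) I(1) b1 b2]) (use assms in simp)
  moreover have "gnorm p r (ps_sub p (PP (Suc M)) (PP M)) \<le> EE r M"
    using PP_step[OF assms(1,2)] step assms by simp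
  moreover have "EE r M \<le> EE r N" using EE_mono step assms by simp
  moreover have "gnorm p r (ps_sub p (PP M) (PP N)) \<le> EE r N" using step by simp
  ultimately have "gnorm p r (ps_sub p (PP (Suc M)) (PP N)) \<le> EE r N"
    by (meson max.bounded_iff order_trans)
  moreover have "bd p r (ps_sub p (PP (Suc M)) (PP N))" using sub_bd[OF pr I(1) I(2) I(1) I(2)] assms by simp
  ultimately show ?case by simp
qed


lemma coef_tail: assumes "0 < r" "r < 1" "n0 p r \<le> N" "N \<le> M"
  shows "qp_abs p (qsub p (PP M k) (PP N k)) * r ^ k \<le> EE r N"
proof -
  have "qp_abs p (ps_sub p (PP M) (PP N) k) * r ^ k \<le> gnorm p r (ps_sub p (PP M) (PP N))"
    using PP_tail[OF assms] by (intro gn_upper) auto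
  also have "\<dots> \<le> EE r N" using PP_tail[OF assms] by auto
  finally show ?thesis unfolding ps_sub_def .
qed

lemma EE_lim: "(\<lambda>N. EE r N) \<longlonglongrightarrow> 0"
proof (rule LIMSEQ_offset[where k = "n0 p r"])
  have "(\<lambda>N. Mr r * cc * qq ^ Suc N) \<longlonglongrightarrow> 0"
    using qq by (intro tendsto_mult_right_zero LIMSEQ_Suc LIMSEQ_power_zero) auto
  thus "(\<lambda>N. EE r (N + n0 p r)) \<longlonglongrightarrow> 0" unfolding EE_def by simp
qed

lemma PPk_in: assumes "0 < (r::real)" "r < 1" shows "PP N k \<in> Qp p"
  using PP_props(1)[OF assms] unfolding inQ_def by auto

lemma PPk_in': "PP N k \<in> Qp p" using PPk_in[of "1/2::real"] by simp

lemma coef_cauchy: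
  "\<forall>e>0. \<exists>N. \<forall>m\<ge>N. \<forall>n\<ge>N. qp_abs p (qsub p (PP m k) (PP n k)) < e"
proof (intro allI impI)
  fix e :: real assume e: "e > 0"
  define r :: real where "r = 1/2"
  have r: "0 < r" "r < 1" unfolding r_def by auto
  have rk: "r ^ k > 0" using r by simp
  have "eventually (\<lambda>N. EE r N < e * r ^ k) sequentially"
    using order_tendstoD(2)[OF EE_lim[of r]] e rk by simp
  then obtain N0 where N0: "\<And>N. N \<ge> N0 \<Longrightarrow> EE r N < e * r ^ k" unfolding eventually_sequentially by blast
  show "\<exists>N. \<forall>m\<ge>N. \<forall>n\<ge>N. qp_abs p (qsub p (PP m k) (PP n k)) < e"
  proof (intro exI allI impI)
    fix m n assume mn: "max N0 (n0 p r) \<le> m" "max N0 (n0 p r) \<le> n"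
    show "qp_abs p (qsub p (PP m k) (PP n k)) < e"
    proof (cases "n \<le> m")
      case True
      have "qp_abs p (qsub p (PP m k) (PP n k)) * r ^ k < e * r ^ k"
        using coef_tail[OF r _ True, of k] N0[of n] mn by fastforce
      thus ?thesis using rk by simp
    next
      case False
      have "qp_abs p (qsub p (PP n k) (PP m k)) * r ^ k < e * r ^ k"
        using coef_tail[OF r _, of m n k] N0[of m] mn False by fastforce
      thus ?thesis using rk abs_sub_sym[OF pr PPk_in' PPk_in'] by simp
    qed
  qed
qed

definition "gg k = (SOME b. b \<in> Qp p \<and> (\<lambda>N. qp_abs p (qsub p (PP N k) b)) \<longlonglongrightarrow> 0)"

lemma gg_prop: "gg k \<in> Qp p" "(\<lambda>N. qp_abs p (qsub p (PP N k) (gg k))) \<longlonglongrightarrow> 0"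
proof -
  have "\<exists>b. b \<in> Qp p \<and> (\<lambda>N. qp_abs p (qsub p (PP N k) b)) \<longlonglongrightarrow> 0"
    using qp_complete[OF pr _ coef_cauchy, of k] PPk_in' by blast
  hence "gg k \<in> Qp p \<and> (\<lambda>N. qp_abs p (qsub p (PP N k) (gg k))) \<longlonglongrightarrow> 0"
    unfolding gg_def by (rule someI_ex)
  thus "gg k \<in> Qp p" "(\<lambda>N. qp_abs p (qsub p (PP N k) (gg k))) \<longlonglongrightarrow> 0" by auto
qed

lemma gg_tail: assumes "0 < r" "r < 1" "n0 p r \<le> N"
  shows "qp_abs p (qsub p (PP N k) (gg k)) * r ^ k \<le> EE r N"
proof -
  have rk: "r ^ k > 0" using assms by simp
  let ?B = "EE r N / r ^ k"
  have "qp_abs p (qsub p (PP N k) (gg k)) \<le> max ?B 0"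
  proof (rule LIMSEQ_le_const[OF tendsto_max[OF tendsto_const gg_prop(2)]])
    show "\<exists>M0. \<forall>M\<ge>M0. qp_abs p (qsub p (PP N k) (gg k)) \<le> max ?B (qp_abs p (qsub p (PP M k) (gg k)))"
    proof (intro exI allI impI)
      fix M assume M: "N \<le> M"
      have "qp_abs p (qsub p (PP N k) (gg k)) \<le> max (qp_abs p (qsub p (PP N k) (PP M k))) (qp_abs p (qsub p (PP M k) (gg k)))"
        by (rule abs_sub_tri[OF pr PPk_in' PPk_in' gg_prop(1)])
      moreover have "qp_abs p (qsub p (PP N k) (PP M k)) \<le> ?B"
        using coef_tail[OF assms M, of k] abs_sub_sym[OF pr PPk_in' PPk_in', of N k M k] rk
        by (simp add: field_simps)
      ultimately show "qp_abs p (qsub p (PP N k) (gg k)) \<le> max ?B (qp_abs p (qsub p (PP M k) (gg k)))"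
        by (meson max.mono order_refl order_trans)
    qed
  qed
  also have "\<dots> = ?B" using EE_nonneg[of r N] rk by simp
  finally show ?thesis using rk by (simp add: field_simps)
qed

lemma gg_inQ: "inQ p gg" unfolding inQ_def using gg_prop(1) by auto

lemma gg_coef_bound: assumes "0 < r" "r < 1" shows "qp_abs p (gg k) * r ^ k \<le> Mr r"
proof -
  have rk: "r ^ k > 0" using assms by simp
  have "qp_abs p (gg k) * r ^ k \<le> max 0 (Mr r)"
  proof (rule LIMSEQ_le_const[OF tendsto_max[OF EE_lim[of r] tendsto_const]])
    show "\<exists>N0. \<forall>N\<ge>N0. qp_abs p (gg k) * r ^ k \<le> max (EE r N) (Mr r)"
    proof (intro exI allI impI)
      fix N assume N: "n0 p r \<le> N"
      have "qp_abs p (gg k) \<le> max (qp_abs p (qsub p (gg k) (PP N k))) (qp_abs p (PP N k))"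
        by (rule abs_le_sub[OF pr gg_prop(1) PPk_in'])
      hence "qp_abs p (gg k) * r ^ k \<le> max (qp_abs p (qsub p (gg k) (PP N k)) * r ^ k) (qp_abs p (PP N k) * r ^ k)"
        using rk by (metis max_mult_distrib_right less_imp_le mult_right_mono)
      moreover have "qp_abs p (qsub p (gg k) (PP N k)) * r ^ k \<le> EE r N"
        using gg_tail[OF assms N, of k] abs_sub_sym[OF pr gg_prop(1) PPk_in'] by simp
      moreover have "qp_abs p (PP N k) * r ^ k \<le> Mr r"
        using gn_upper[OF PP_props(2)[OF assms]] PP_props(3)[OF assms] order_trans by blast
      ultimately show "qp_abs p (gg k) * r ^ k \<le> max (EE r N) (Mr r)"
        by (meson max.mono order_trans)
    qed
  qed
  thus ?thesis using Mr[of r] by simp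
qed

lemma gg_bd: assumes "0 < r" "r < 1" shows "bd p r gg" "gnorm p r gg \<le> Mr r"
  using gg_coef_bound[OF assms] by (auto intro: bd_I gn_least)

lemma gg_inH: "inH p gg"
  unfolding inH_def
proof (intro conjI allI impI)
  show "gg k \<in> Qp p" for k by (rule gg_prop(1))
  fix r :: real assume r: "0 < r \<and> r < 1"
  define s where "s = (1 + r) / 2"
  have s: "0 < s" "s < 1" "r < s" using r unfolding s_def by auto
  have rs: "0 < r / s" "r / s < 1" using s r by auto
  show "(\<lambda>k. qp_abs p (gg k) * r ^ k) \<longlonglongrightarrow> 0"
  proof (rule tendsto_sandwich[of "\<lambda>_. 0" _ _ "\<lambda>k. Mr s * (r / s) ^ k"])
    show "\<forall>\<^sub>F k in sequentially. 0 \<le> qp_abs p (gg k) * r ^ k"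
      using abs_nonneg[OF pr gg_prop(1)] r by simp
    show "\<forall>\<^sub>F k in sequentially. qp_abs p (gg k) * r ^ k \<le> Mr s * (r / s) ^ k"
    proof (rule always_eventually, rule allI)
      fix k
      have "qp_abs p (gg k) * r ^ k = (qp_abs p (gg k) * s ^ k) * (r / s) ^ k"
        using s by (simp add: power_divide)
      also have "\<dots> \<le> Mr s * (r / s) ^ k"
        using gg_coef_bound[OF s(1,2)] rs by (intro mult_right_mono) auto
      finally show "qp_abs p (gg k) * r ^ k \<le> Mr s * (r / s) ^ k" .
    qed
    show "(\<lambda>k. 0) \<longlonglongrightarrow> (0::real)" by simp
    show "(\<lambda>k. Mr s * (r / s) ^ k) \<longlonglongrightarrow> 0"
      using rs by (intro tendsto_mult_right_zero LIMSEQ_power_zero) auto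
  qed
qed

lemma gg_conv: "conv_H p (pprod p G) gg"
  unfolding conv_H_def
proof (intro allI impI)
  fix r :: real assume r: "0 < r \<and> r < 1"
  have e: "pprod p G N = PP N" for N by (simp add: PP_def)
  have up: "gnorm p r (ps_sub p (PP N) gg) \<le> EE r N" if "n0 p r \<le> N" for N
    using gg_tail[of r N] r that unfolding ps_sub_def by (intro gn_least) auto
  have lo: "0 \<le> gnorm p r (ps_sub p (PP N) gg)" if "n0 p r \<le> N" for N
  proof -
    have "bd p r (ps_sub p (PP N) gg)"
      using gg_tail[of r N] r that unfolding ps_sub_def by (intro bd_I) auto
    thus ?thesis using gn_nonneg[OF pr sub_inQ[OF pr PP_props(1) gg_inQ]] r by auto
  qed
  show "(\<lambda>N. gnorm p r (ps_sub p (pprod p G N) gg)) \<longlonglongrightarrow> 0"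
    unfolding e
  proof (rule tendsto_sandwich[of "\<lambda>_. 0" _ _ "EE r"])
    show "\<forall>\<^sub>F N in sequentially. 0 \<le> gnorm p r (ps_sub p (PP N) gg)"
      unfolding eventually_sequentially using lo by blast
    show "\<forall>\<^sub>F N in sequentially. gnorm p r (ps_sub p (PP N) gg) \<le> EE r N"
      unfolding eventually_sequentially using up by blast
  qed (auto intro: EE_lim)
qed

lemma rho0_pos: "rho0 p > 0" unfolding rho0_def using p1 by simp

lemma n0_spec: assumes "0 < r" "r < 1" shows "r ^ (p ^ n0 p r) \<le> rho0 p"
proof -
  have "eventually (\<lambda>n. r ^ n < rho0 p) sequentially"
    using order_tendstoD(2)[OF LIMSEQ_power_zero[of r] rho0_pos] assms by simp
  then obtain n where n: "r ^ n < rho0 p" unfolding eventually_sequentially by blast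
  have "n \<le> p ^ n"
  proof -
    have "n < 2 ^ n" by simp
    also have "2 ^ n \<le> p ^ n" using pr prime_ge_2_nat by (intro power_mono) auto
    finally show ?thesis by simp
  qed
  hence "r ^ (p ^ n) \<le> r ^ n" using assms by (intro power_decreasing) auto
  hence "\<exists>n. r ^ (p ^ n) \<le> rho0 p" using n by (meson less_imp_le order_trans)
  thus ?thesis unfolding n0_def by (rule LeastI_ex)
qed

lemma n0_root: assumes "0 < r" "r < 1" shows "n0 p (r powr (1 / real p ^ m)) \<le> n0 p r + m"
proof -
  let ?N = "n0 p r"
  have "(r powr (1 / real p ^ m)) ^ (p ^ (?N + m)) = r powr (real (p ^ (?N + m)) * (1 / real p ^ m))"
    using assms by (simp add: powr_power)
  also have "real (p ^ (?N + m)) * (1 / real p ^ m) = real (p ^ ?N)"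
    using p1 by (simp add: power_add)
  also have "r powr real (p ^ ?N) = r ^ (p ^ ?N)" by (rule powr_realpow[OF assms(1)])
  finally have "(r powr (1 / real p ^ m)) ^ (p ^ (?N + m)) \<le> rho0 p" using n0_spec[OF assms] by simp
  thus ?thesis unfolding n0_def by (rule Least_le)
qed

lemma gg_order: "order_H p gg \<le> ereal mu"
proof -
  define rho :: real where "rho = 1/2"
  have rho: "0 < rho" "rho < 1" unfolding rho_def by auto
  let ?r = "\<lambda>m::nat. rho powr (1 / real p ^ m)"
  have rm: "0 < ?r m" "?r m < 1" for m
  proof -
    show "0 < ?r m" using rho by simp
    have "?r m < 1 powr (1 / real p ^ m)" using rho p1 by (intro powr_less_mono2) auto
    thus "?r m < 1" by simp
  qed
  have bnd: "real p powr (- real m * mu) * gnorm p (?r m) gg \<le> (real p powr mu) ^ n0 p rho * Bc" for m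
  proof -
    have "gnorm p (?r m) gg \<le> Mr (?r m)" by (rule gg_bd(2)[OF rm])
    also have "\<dots> \<le> (real p powr mu) ^ (n0 p rho + m) * Bc"
      unfolding Mr_def using Bc pmu1 n0_root[OF rho, of m]
      by (intro mult_right_mono power_increasing) auto
    finally have "real p powr (- real m * mu) * gnorm p (?r m) gg \<le>
       real p powr (- real m * mu) * ((real p powr mu) ^ (n0 p rho + m) * Bc)"
      by (intro mult_left_mono) auto
    also have "\<dots> = (real p powr mu) ^ n0 p rho * Bc * (real p powr (- real m * mu) * (real p powr mu) ^ m)"
      by (simp add: power_add)
    also have "real p powr (- real m * mu) * (real p powr mu) ^ m = 1"
      using p1 by (simp add: powr_power powr_add[symmetric])
    finally show ?thesis by simp
  qed
  have B: "bdd_above (range (\<lambda>m::nat. real p powr (- real m * mu) * gnorm p (rho powr (1 / real p ^ m)) gg))"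
    using bnd by (intro bdd_aboveI2)
  have "ereal mu \<in> {ereal h | h. \<exists>r. 0 < r \<and> r < 1 \<and>
      bdd_above (range (\<lambda>m::nat. real p powr (- real m * h) * gnorm p (r powr (1 / real p ^ m)) gg))}"
    using rho B by blast
  thus ?thesis unfolding order_H_def by (rule Inf_lower)
qed

lemma ex_g: "\<exists>g. inH p g \<and> conv_H p (pprod p G) g \<and> order_H p g \<le> ereal mu"
  using gg_inH gg_conv gg_order by blast

end


lemma lim_bd: assumes "(\<lambda>k. qp_abs p (f k) * r ^ k) \<longlonglongrightarrow> 0" shows "bd p r f"
  unfolding bd_def using assms by (intro Bseq_bdd_above convergent_imp_Bseq convergentI)

theorem mainTheorem4:
  fixes p :: nat and lam mu :: real and G :: "nat \<Rightarrow> pser"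
  assumes "prime p" and "odd p"
    and "lam > 0" and "mu \<ge> 0"
    and "\<forall>n\<ge>1. inH p (G n)"
    and "prod_type p G lam mu"
  shows "\<exists>g. inH p g \<and> conv_H p (pprod p G) g \<and> order_H p g \<le> ereal mu"
proof -
  obtain nu :: real where nu: "\<forall>r. 0 < r \<and> r < 1 \<longrightarrow> (\<forall>n\<ge>1. n \<ge> n0 p r \<longrightarrow>
        gnorm p r (ps_sub p (G n) (ps_one p))
          \<le> real p powr nu * real p powr (- lam * (real n - real (n0 p r))))"
    using assms(6) unfolding prod_type_def by blast
  have T1: "\<forall>n\<ge>1. \<forall>r. 0 < r \<and> r < 1 \<longrightarrow> gnorm p r (G n) \<le> real p powr mu"
    using assms(6) unfolding prod_type_def by blast
  show ?thesis
  proof (rule ex_g[of p lam mu G nu])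
    show "prime p" "lam > 0" "mu \<ge> 0" using assms by auto
    show "\<And>n. 1 \<le> n \<Longrightarrow> inQ p (G n)" using assms(5) unfolding inH_def inQ_def by auto
    show "\<And>n r. 1 \<le> n \<Longrightarrow> 0 < r \<Longrightarrow> r < 1 \<Longrightarrow> bd p r (G n)"
      using assms(5) unfolding inH_def by (auto intro: lim_bd)
    show "\<And>n r. 1 \<le> n \<Longrightarrow> 0 < r \<Longrightarrow> r < 1 \<Longrightarrow> gnorm p r (G n) \<le> real p powr mu"
      using T1 by auto
    show "\<And>n r. 0 < r \<Longrightarrow> r < 1 \<Longrightarrow> 1 \<le> n \<Longrightarrow> n0 p r \<le> n \<Longrightarrow>
      gnorm p r (ps_sub p (G n) (ps_one p)) \<le> real p powr nu * real p powr (- lam * (real n - real (n0 p r)))"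
      using nu by auto
  qed
qed


end
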